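(* Let $\gamma,\sigma:[a,b]\to V$ be continuous paths of bounded variation. Let $\phi:\mathbb{Z}\to\mathbb{C}$, $\phi_k:=\phi(k)$, be the Fourier coefficients of a bounded integrable function $f:(-\pi,\pi)\to\mathbb{C}$, i.e. $\phi_k=\frac1{2\pi}\int_{-\pi}^\pi f(x)e^{-ikx}dx$ for all $k\in\mathbb{Z}$ (so $f=\sum_{k\in\mathbb{Z}}\phi_ke_k$, $e_k(x)=e^{ikx}$). Then for all $(s,t)\in[a,b]^2$, \[ K_\phi^{\gamma,\sigma}(s,t)=\frac1{2\pi}\int_{-\pi}^{\pi}\left[K^{e^{-ix}\gamma,\sigma}(s,t)+K^{e^{ix}\gamma,\sigma}(s,t)\right]f(x)\,dx-\phi_0 . \]
   Context: $V$ is a finite-dimensional real inner product space, $\langle\cdot,\cdot\rangle_k$ the induced Hilbert–Schmidt inner product on $V^{\otimes k}$. Signature: $S(\gamma)^0=1$, $S(\gamma)^k_{s,t}=\int_{s<u_1<\dots<u_k<t}d\gamma_{u_1}\otimes\cdots\otimes d\gamma_{u_k}$. Write $c_k(s,t)=\langle S(\gamma)^k_{a,s},S(\sigma)^k_{a,t}\rangle_k$. For $\phi:\mathbb{Z}\to\mathbb{C}$ the two-sided kernel is $K_\phi^{\gamma,\sigma}(s,t)=\sum_{k=-\infty}^\infty\phi(k)c_{|k|}(s,t)$. For $w\in\mathbb{C}$, $K^{w\gamma,\sigma}(s,t):=\sum_{k\ge0}w^kc_k(s,t)$. *)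

theory Defs
  imports "HOL-Analysis.Analysis"
begin

definition is_partition :: "real \<Rightarrow> real \<Rightarrow> real list \<Rightarrow> bool" where
  "is_partition a b xs \<longleftrightarrow> xs \<noteq> [] \<and> hd xs = a \<and> last xs = b \<and> sorted_wrt (<) xs"

definition mesh_less :: "real list \<Rightarrow> real \<Rightarrow> bool" where
  "mesh_less xs d \<longleftrightarrow> (\<forall>i < length xs - 1. xs ! Suc i - xs ! i < d)"

definition bounded_variation_on :: "real \<Rightarrow> real \<Rightarrow> (real \<Rightarrow> 'a::real_normed_vector) \<Rightarrow> bool" where
  "bounded_variation_on a b g \<longleftrightarrow>
     (\<exists>M. \<forall>xs. is_partition a b xs \<longrightarrow>
        (\<Sum>i < length xs - 1. norm (g (xs ! Suc i) - g (xs ! i))) \<le> M)"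

definition tagged_partition :: "real \<Rightarrow> real \<Rightarrow> real list \<Rightarrow> real list \<Rightarrow> bool" where
  "tagged_partition a b xs ts \<longleftrightarrow> is_partition a b xs \<and> length ts = length xs - 1 \<and>
     (\<forall>i < length ts. xs ! i \<le> ts ! i \<and> ts ! i \<le> xs ! Suc i)"

definition rs_sum :: "(real \<Rightarrow> real) \<Rightarrow> (real \<Rightarrow> real) \<Rightarrow> real list \<Rightarrow> real list \<Rightarrow> real" where
  "rs_sum f g xs ts = (\<Sum>i < length xs - 1. f (ts ! i) * (g (xs ! Suc i) - g (xs ! i)))"

definition has_rs_integral :: "(real \<Rightarrow> real) \<Rightarrow> (real \<Rightarrow> real) \<Rightarrow> real \<Rightarrow> real \<Rightarrow> real \<Rightarrow> bool" where
  "has_rs_integral f g a b I \<longleftrightarrow>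
     (\<forall>e>0. \<exists>d>0. \<forall>xs ts. tagged_partition a b xs ts \<and> mesh_less xs d \<longrightarrow>
        \<bar>rs_sum f g xs ts - I\<bar> < e)"

definition rs_integral :: "(real \<Rightarrow> real) \<Rightarrow> (real \<Rightarrow> real) \<Rightarrow> real \<Rightarrow> real \<Rightarrow> real" where
  "rs_integral f g a b = (THE I. has_rs_integral f g a b I)"

text \<open>Coordinates of the signature level \<open>S(\<gamma>)^k_{a,t}\<close> with respect to the orthonormal basis
  \<open>Basis\<close> of V, tensorised. A word is stored reversed: \<open>i # w\<close> stands for the word \<open>w\<close> followed
  by the letter \<open>i\<close>, so \<open>S^{k+1}_{a,t}(w i) = \<integral>_a^t S^k_{a,u}(w) d\<gamma>^i_u\<close>.\<close>
fun sig_coord :: "(real \<Rightarrow> 'v::euclidean_space) \<Rightarrow> real \<Rightarrow> 'v list \<Rightarrow> real \<Rightarrow> real" where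
  "sig_coord \<gamma> a [] t = 1"
| "sig_coord \<gamma> a (i # w) t = rs_integral (\<lambda>u. sig_coord \<gamma> a w u) (\<lambda>u. \<gamma> u \<bullet> i) a t"

definition words :: "nat \<Rightarrow> 'v::euclidean_space list set" where
  "words k = {w. set w \<subseteq> Basis \<and> length w = k}"

text \<open>\<open>c_k(s,t) = \<langle>S(\<gamma>)^k_{a,s}, S(\<sigma>)^k_{a,t}\<rangle>\<close> (Hilbert--Schmidt inner product on \<open>V^{\<otimes>k}\<close>).\<close>
definition sig_ip :: "(real \<Rightarrow> 'v::euclidean_space) \<Rightarrow> (real \<Rightarrow> 'v) \<Rightarrow> real \<Rightarrow> nat \<Rightarrow> real \<Rightarrow> real \<Rightarrow> real" where
  "sig_ip \<gamma> \<sigma> a k s t = (\<Sum>w \<in> words k. sig_coord \<gamma> a w s * sig_coord \<sigma> a w t)"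

definition sig_kernel_w :: "complex \<Rightarrow> (real \<Rightarrow> 'v::euclidean_space) \<Rightarrow> (real \<Rightarrow> 'v) \<Rightarrow> real \<Rightarrow> real \<Rightarrow> real \<Rightarrow> complex" where
  "sig_kernel_w z \<gamma> \<sigma> a s t = (\<Sum>k. z ^ k * complex_of_real (sig_ip \<gamma> \<sigma> a k s t))"

definition sig_kernel_phi :: "(int \<Rightarrow> complex) \<Rightarrow> (real \<Rightarrow> 'v::euclidean_space) \<Rightarrow> (real \<Rightarrow> 'v) \<Rightarrow> real \<Rightarrow> real \<Rightarrow> real \<Rightarrow> complex" where
  "sig_kernel_phi \<phi> \<gamma> \<sigma> a s t = infsum (\<lambda>k. \<phi> k * complex_of_real (sig_ip \<gamma> \<sigma> a (nat \<bar>k\<bar>) s t)) UNIV"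

end

theory Submission
  imports Defs
begin



fun vsum :: "(real \<Rightarrow> 'a::real_normed_vector) \<Rightarrow> real list \<Rightarrow> real" where
  "vsum g (x # y # r) = norm (g y - g x) + vsum g (y # r)"
| "vsum g _ = 0"

lemma vsum_eq: "vsum g xs = (\<Sum>i<length xs - 1. norm (g (xs ! Suc i) - g (xs ! i)))"
proof (induction g xs rule: vsum.induct)
  case (1 g x y r)
  have "(\<Sum>i<length (x # y # r) - 1. norm (g ((x # y # r) ! Suc i) - g ((x # y # r) ! i)))
      = (\<Sum>i<Suc (length (y # r) - 1). norm (g ((x # y # r) ! Suc i) - g ((x # y # r) ! i)))"
    by simp
  also have "\<dots> = norm (g y - g x) + (\<Sum>i<length (y # r) - 1. norm (g ((y # r) ! Suc i) - g ((y # r) ! i)))"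
    by (subst sum.lessThan_Suc_shift) simp
  finally show ?case using 1 by simp
qed auto

lemma vsum_nonneg: "vsum g xs \<ge> 0"
  by (induction g xs rule: vsum.induct) auto

lemma part_Nil[simp]: "\<not> is_partition a b []"
  by (simp add: is_partition_def)

lemma part_single[simp]: "is_partition a b [x] \<longleftrightarrow> x = a \<and> a = b"
  by (auto simp: is_partition_def)

lemma part_Cons2: "is_partition a b (x # y # r) \<longleftrightarrow> x = a \<and> a < y \<and> is_partition y b (y # r)"
proof -
  have "transp ((<) :: real \<Rightarrow> real \<Rightarrow> bool)" by (auto simp: transp_def)
  then show ?thesis by (auto simp: is_partition_def sorted_wrt2)
qed

lemma part_le: "is_partition a b xs \<Longrightarrow> a \<le> b \<and> set xs \<subseteq> {a..b}"
proof (induction xs arbitrary: a rule: induct_list012)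
  case (3 x y zs)
  then show ?case by (fastforce simp: part_Cons2)
qed auto

lemma part_concat:
  assumes "is_partition a b xs" "is_partition b c ys"
  shows "is_partition a c (xs @ tl ys) \<and> vsum g (xs @ tl ys) = vsum g xs + vsum g ys"
  using assms
proof (induction xs arbitrary: a rule: induct_list012)
  case (2 x)
  then have "ys = b # tl ys" by (cases ys) (auto simp: is_partition_def)
  moreover have "x = a" "a = b" using 2 by auto
  ultimately show ?case using 2 by simp
next
  case (3 x y zs)
  then have h: "x = a" "a < y" "is_partition y b (y # zs)" by (auto simp: part_Cons2)
  with 3 have "is_partition y c ((y # zs) @ tl ys) \<and> vsum g ((y # zs) @ tl ys) = vsum g (y # zs) + vsum g ys"
    by blast
  then show ?case using h by (simp add: part_Cons2)
qed auto

lemma part_exists: "a \<le> b \<Longrightarrow> \<exists>xs. is_partition a b xs"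
proof (cases "a = b")
  case True then show ?thesis by (intro exI[of _ "[a]"]) simp
next
  case False
  assume "a \<le> b"
  with False show ?thesis by (intro exI[of _ "[a,b]"]) (simp add: part_Cons2)
qed

lemma part_snoc:
  assumes "is_partition a t P" "a < t"
  shows "\<exists>Q p. P = Q @ [t] \<and> is_partition a p Q \<and> p < t"
  using assms
proof (induction P arbitrary: a rule: induct_list012)
  case (3 x y zs)
  then have h: "x = a" "a < y" "is_partition y t (y # zs)" by (auto simp: part_Cons2)
  show ?case
  proof (cases zs)
    case Nil
    then show ?thesis using h by (auto intro!: exI[of _ "[a]"])
  next
    case (Cons z zs')
    then have "y < t" using h(3) part_le[of z t "z # zs'"] by (auto simp: part_Cons2)
    then obtain Q p where "y # zs = Q @ [t]" "is_partition y p Q" "p < t" using 3 h by blast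
    then show ?thesis using h
      by (intro exI[of _ "x # Q"] exI[of _ p]) (cases Q; auto simp: part_Cons2)
  qed
qed auto

definition tvar :: "(real \<Rightarrow> 'a::real_normed_vector) \<Rightarrow> real \<Rightarrow> real \<Rightarrow> real" where
  "tvar g x y = Sup (vsum g ` {xs. is_partition x y xs})"

locale bvpath =
  fixes \<gamma> :: "real \<Rightarrow> 'a::real_normed_vector" and a b :: real
  assumes cont: "continuous_on {a..b} \<gamma>" and bv: "bounded_variation_on a b \<gamma>"
begin

lemma bvM: obtains M where "\<And>xs. is_partition a b xs \<Longrightarrow> vsum \<gamma> xs \<le> M"
  using bv unfolding bounded_variation_on_def vsum_eq by blast

lemma vsum_bdd:
  assumes "a \<le> x" "x \<le> y" "y \<le> b"
  shows "bdd_above (vsum \<gamma> ` {xs. is_partition x y xs})"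
proof -
  obtain M where M: "\<And>xs. is_partition a b xs \<Longrightarrow> vsum \<gamma> xs \<le> M" using bvM by blast
  obtain pre where pre: "is_partition a x pre" using part_exists assms by blast
  obtain post where post: "is_partition y b post" using part_exists assms by blast
  show ?thesis unfolding bdd_above_def
  proof (intro exI ballI)
    fix s assume "s \<in> vsum \<gamma> ` {xs. is_partition x y xs}"
    then obtain xs where xs: "is_partition x y xs" "s = vsum \<gamma> xs" by auto
    have c1: "is_partition a y (pre @ tl xs) \<and> vsum \<gamma> (pre @ tl xs) = vsum \<gamma> pre + vsum \<gamma> xs"
      using part_concat pre xs by blast
    have c2: "is_partition a b ((pre @ tl xs) @ tl post) \<and> vsum \<gamma> ((pre @ tl xs) @ tl post)
         = vsum \<gamma> (pre @ tl xs) + vsum \<gamma> post"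
      using part_concat c1 post by blast
    show "s \<le> M" using M[of "(pre @ tl xs) @ tl post"] c1 c2 xs vsum_nonneg[of \<gamma> pre] vsum_nonneg[of \<gamma> post]
      by linarith
  qed
qed

lemma tvar_ge:
  assumes "a \<le> x" "y \<le> b" "is_partition x y xs"
  shows "vsum \<gamma> xs \<le> tvar \<gamma> x y"
  unfolding tvar_def using assms part_le[OF assms(3)]
  by (intro cSup_upper vsum_bdd) auto

lemma tvar_le:
  assumes "x \<le> y" "\<And>xs. is_partition x y xs \<Longrightarrow> vsum \<gamma> xs \<le> c"
  shows "tvar \<gamma> x y \<le> c"
  unfolding tvar_def using assms part_exists[OF assms(1)]
  by (intro cSup_least) auto

lemma tvar_nonneg:
  assumes "a \<le> x" "x \<le> y" "y \<le> b"
  shows "tvar \<gamma> x y \<ge> 0"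
  using part_exists[of x y] assms tvar_ge[of x y] vsum_nonneg[of \<gamma>] by (meson order_trans)

lemma norm_le_tvar:
  assumes "a \<le> x" "x \<le> y" "y \<le> b"
  shows "norm (\<gamma> y - \<gamma> x) \<le> tvar \<gamma> x y"
proof (cases "x = y")
  case True then show ?thesis using tvar_nonneg assms by simp
next
  case False
  then have "is_partition x y [x, y]" using assms by (simp add: part_Cons2)
  from tvar_ge[OF _ _ this] assms show ?thesis by simp
qed

lemma tvar_super:
  assumes "a \<le> x" "x \<le> y" "y \<le> z" "z \<le> b"
  shows "tvar \<gamma> x y + tvar \<gamma> y z \<le> tvar \<gamma> x z"
proof -
  have "\<forall>xs. is_partition x y xs \<longrightarrow> vsum \<gamma> xs \<le> tvar \<gamma> x z - tvar \<gamma> y z"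
  proof (intro allI impI)
    fix xs assume xs: "is_partition x y xs"
    have "tvar \<gamma> y z \<le> tvar \<gamma> x z - vsum \<gamma> xs"
    proof (rule tvar_le)
      fix ys assume ys: "is_partition y z ys"
      have "is_partition x z (xs @ tl ys) \<and> vsum \<gamma> (xs @ tl ys) = vsum \<gamma> xs + vsum \<gamma> ys"
        using part_concat xs ys by blast
      then show "vsum \<gamma> ys \<le> tvar \<gamma> x z - vsum \<gamma> xs"
        using tvar_ge[of x z "xs @ tl ys"] assms by simp
    qed (use assms in auto)
    then show "vsum \<gamma> xs \<le> tvar \<gamma> x z - tvar \<gamma> y z" by simp
  qed
  then have "tvar \<gamma> x y \<le> tvar \<gamma> x z - tvar \<gamma> y z"
    using assms by (intro tvar_le) auto
  then show ?thesis by simp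
qed

lemma tvar_mono:
  assumes "a \<le> x" "x \<le> y" "y \<le> z" "z \<le> b"
  shows "tvar \<gamma> x y \<le> tvar \<gamma> x z"
  using tvar_super[OF assms] tvar_nonneg[of y z] assms by simp

lemma tvar_mono2:
  assumes "a \<le> x" "x \<le> y" "y \<le> z" "z \<le> b"
  shows "tvar \<gamma> y z \<le> tvar \<gamma> x z"
  using tvar_super[OF assms] tvar_nonneg[of x y] assms by simp

lemma vsum_le_split:
  assumes "is_partition x z xs" "a \<le> x" "x \<le> y" "y \<le> z" "z \<le> b"
  shows "vsum \<gamma> xs \<le> tvar \<gamma> x y + tvar \<gamma> y z"
  using assms
proof (induction xs arbitrary: x rule: induct_list012)
  case (2 u)
  then show ?case using tvar_nonneg[of x y] tvar_nonneg[of y z] by simp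
next
  case (3 u p r)
  then have h: "u = x" "x < p" "is_partition p z (p # r)" by (auto simp: part_Cons2)
  have pz: "p \<le> z" using part_le[OF h(3)] by simp
  show ?case
  proof (cases "p \<le> y")
    case True
    have "vsum \<gamma> (p # r) \<le> tvar \<gamma> p y + tvar \<gamma> y z"
      using 3(2)[OF h(3)] 3(4-) h True by simp
    moreover have "norm (\<gamma> p - \<gamma> x) + tvar \<gamma> p y \<le> tvar \<gamma> x y"
      using norm_le_tvar[of x p] tvar_super[of x p y] 3(4-) h True by simp
    ultimately show ?thesis using h by simp
  next
    case False
    have "is_partition y z (y # p # r)" using h False by (simp add: part_Cons2)
    then have "vsum \<gamma> (y # p # r) \<le> tvar \<gamma> y z" using tvar_ge[of y z "y # p # r"] 3(4-) by linarith
    moreover have "norm (\<gamma> p - \<gamma> x) \<le> norm (\<gamma> y - \<gamma> x) + norm (\<gamma> p - \<gamma> y)"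
      using norm_triangle_ineq[of "\<gamma> y - \<gamma> x" "\<gamma> p - \<gamma> y"] by simp
    moreover have "norm (\<gamma> y - \<gamma> x) \<le> tvar \<gamma> x y" using norm_le_tvar 3(4-) by auto
    ultimately show ?thesis using h by simp
  qed
qed auto

lemma tvar_add:
  assumes "a \<le> x" "x \<le> y" "y \<le> z" "z \<le> b"
  shows "tvar \<gamma> x z = tvar \<gamma> x y + tvar \<gamma> y z"
proof -
  have "tvar \<gamma> x z \<le> tvar \<gamma> x y + tvar \<gamma> y z"
    using assms by (intro tvar_le vsum_le_split) auto
  then show ?thesis using tvar_super[OF assms] by simp
qed

end



context bvpath begin

lemma tvar_refl: "tvar \<gamma> x x = 0"
proof -
  have "vsum \<gamma> ` {xs. is_partition x x xs} = {0}"
  proof -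
    have "is_partition x x xs \<longleftrightarrow> xs = [x]" for xs
      by (cases xs rule: remdups_adj.cases) (auto simp: part_Cons2 dest: part_le)
    then show ?thesis by auto
  qed
  then show ?thesis by (simp add: tvar_def)
qed

lemma tvar_right:
  assumes "a \<le> t" "t < b" "e > 0"
  shows "\<exists>d>0. \<forall>y. t < y \<and> y \<le> b \<and> y - t < d \<longrightarrow> tvar \<gamma> t y < e"
proof -
  have ne: "vsum \<gamma> ` {xs. is_partition t b xs} \<noteq> {}" using part_exists assms by auto
  have "tvar \<gamma> t b - e/2 < tvar \<gamma> t b" using assms by simp
  then obtain P where P: "is_partition t b P" "tvar \<gamma> t b - e/2 < vsum \<gamma> P"
    unfolding tvar_def using less_cSup_iff[OF ne vsum_bdd[of t b]] assms by auto
  then obtain p r where Pe: "P = t # p # r"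
    using assms by (cases P rule: remdups_adj.cases) (auto simp: is_partition_def)
  with P have h: "t < p" "is_partition p b (p # r)" by (auto simp: part_Cons2)
  have pb: "p \<le> b" using part_le[OF h(2)] by simp
  obtain \<eta> where \<eta>: "\<eta> > 0" "\<And>y. y \<in> {a..b} \<Longrightarrow> dist y t < \<eta> \<Longrightarrow> dist (\<gamma> y) (\<gamma> t) < e/2"
    using cont assms unfolding continuous_on_iff by (metis atLeastAtMost_iff half_gt_zero less_imp_le)
  define y1 where "y1 = min (t + \<eta>/2) ((t + p)/2)"
  have y1: "t < y1" "y1 < p" using \<eta> h unfolding y1_def by (auto simp: min_def)
  have "norm (\<gamma> y1 - \<gamma> t) < e/2" using \<eta>(2)[of y1] y1 assms pb \<eta>(1)
    by (auto simp: dist_norm y1_def)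
  moreover have "norm (\<gamma> p - \<gamma> t) \<le> norm (\<gamma> y1 - \<gamma> t) + norm (\<gamma> p - \<gamma> y1)"
    using norm_triangle_ineq[of "\<gamma> y1 - \<gamma> t" "\<gamma> p - \<gamma> y1"] by simp
  moreover have "vsum \<gamma> (y1 # p # r) \<le> tvar \<gamma> y1 b"
    using tvar_ge[of y1 b "y1 # p # r"] h y1 assms by (simp add: part_Cons2)
  ultimately have "vsum \<gamma> P < e/2 + tvar \<gamma> y1 b" using Pe by simp
  with P have "tvar \<gamma> t y1 < e" using tvar_add[of t y1 b] assms y1 pb by simp
  then show ?thesis
  proof (intro exI[of _ "y1 - t"] conjI allI impI)
    fix y assume "t < y \<and> y \<le> b \<and> y - t < y1 - t"
    then show "tvar \<gamma> t y < e" using tvar_mono[of t y y1] assms y1 pb \<open>tvar \<gamma> t y1 < e\<close> by simp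
  qed (use y1 in simp)
qed

lemma tvar_left:
  assumes "a < t" "t \<le> b" "e > 0"
  shows "\<exists>d>0. \<forall>x. a \<le> x \<and> x < t \<and> t - x < d \<longrightarrow> tvar \<gamma> x t < e"
proof -
  have ne: "vsum \<gamma> ` {xs. is_partition a t xs} \<noteq> {}" using part_exists assms by auto
  have "tvar \<gamma> a t - e/2 < tvar \<gamma> a t" using assms by simp
  then obtain P where P: "is_partition a t P" "tvar \<gamma> a t - e/2 < vsum \<gamma> P"
    unfolding tvar_def using less_cSup_iff[OF ne vsum_bdd[of a t]] assms by auto
  then obtain Q p where Q: "P = Q @ [t]" "is_partition a p Q" "p < t" using part_snoc assms by blast
  have ap: "a \<le> p" using part_le[OF Q(2)] by simp
  obtain \<eta> where \<eta>: "\<eta> > 0" "\<And>y. y \<in> {a..b} \<Longrightarrow> dist y t < \<eta> \<Longrightarrow> dist (\<gamma> y) (\<gamma> t) < e/2"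
    using cont assms unfolding continuous_on_iff by (metis atLeastAtMost_iff half_gt_zero less_imp_le)
  define y1 where "y1 = max (t - \<eta>/2) ((t + p)/2)"
  have y1: "p < y1" "y1 < t" using \<eta> Q unfolding y1_def by (auto simp: max_def)
  have "norm (\<gamma> t - \<gamma> y1) < e/2" using \<eta>(2)[of y1] y1 assms ap \<eta>(1)
    by (auto simp: dist_norm y1_def norm_minus_commute)
  moreover have "norm (\<gamma> t - \<gamma> p) \<le> norm (\<gamma> y1 - \<gamma> p) + norm (\<gamma> t - \<gamma> y1)"
    using norm_triangle_ineq[of "\<gamma> y1 - \<gamma> p" "\<gamma> t - \<gamma> y1"] by simp
  moreover have c1: "is_partition a t (Q @ tl [p, t]) \<and> vsum \<gamma> (Q @ tl [p, t]) = vsum \<gamma> Q + vsum \<gamma> [p, t]"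
    using part_concat[OF Q(2), of t "[p,t]"] Q by (simp add: part_Cons2)
  moreover have c2: "is_partition a y1 (Q @ tl [p, y1]) \<and> vsum \<gamma> (Q @ tl [p, y1]) = vsum \<gamma> Q + vsum \<gamma> [p, y1]"
    using part_concat[OF Q(2), of y1 "[p,y1]"] y1 by (simp add: part_Cons2)
  moreover have "vsum \<gamma> (Q @ [y1]) \<le> tvar \<gamma> a y1"
    using tvar_ge[of a y1 "Q @ [y1]"] c2 y1 assms by simp
  ultimately have "vsum \<gamma> P < tvar \<gamma> a y1 + e/2" using Q by simp
  with P have "tvar \<gamma> y1 t < e" using tvar_add[of a y1 t] assms y1 ap by simp
  then show ?thesis
  proof (intro exI[of _ "t - y1"] conjI allI impI)
    fix x assume "a \<le> x \<and> x < t \<and> t - x < t - y1"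
    then show "tvar \<gamma> x t < e" using tvar_mono2[of y1 x t] assms y1 ap \<open>tvar \<gamma> y1 t < e\<close> by simp
  qed (use y1 in simp)
qed

lemma tvar_cont: "continuous_on {a..b} (tvar \<gamma> a)"
  unfolding continuous_on_iff
proof (intro ballI allI impI)
  fix t e :: real assume t: "t \<in> {a..b}" and e: "e > 0"
  obtain d1 where d1: "d1 > 0" "\<And>y. t < y \<and> y \<le> b \<and> y - t < d1 \<Longrightarrow> tvar \<gamma> t y < e"
  proof (cases "t < b")
    case True then show ?thesis using tvar_right[of t e] t e that by auto
  next
    case False then show ?thesis using that[of 1] t by auto
  qed
  obtain d2 where d2: "d2 > 0" "\<And>x. a \<le> x \<and> x < t \<and> t - x < d2 \<Longrightarrow> tvar \<gamma> x t < e"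
  proof (cases "a < t")
    case True then show ?thesis using tvar_left[of t e] t e that by auto
  next
    case False then show ?thesis using that[of 1] t by auto
  qed
  show "\<exists>d>0. \<forall>x'\<in>{a..b}. dist x' t < d \<longrightarrow> dist (tvar \<gamma> a x') (tvar \<gamma> a t) < e"
  proof (intro exI[of _ "min d1 d2"] conjI ballI impI)
    fix x' assume x': "x' \<in> {a..b}" "dist x' t < min d1 d2"
    consider "t < x'" | "x' < t" | "x' = t" by linarith
    then show "dist (tvar \<gamma> a x') (tvar \<gamma> a t) < e"
    proof cases
      case 1
      then have "tvar \<gamma> a x' = tvar \<gamma> a t + tvar \<gamma> t x'" using tvar_add[of a t x'] t x' by simp
      moreover have "tvar \<gamma> t x' < e" using d1(2)[of x'] 1 x' by (auto simp: dist_real_def)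
      moreover have "tvar \<gamma> t x' \<ge> 0" using tvar_nonneg[of t x'] 1 t x' by simp
      ultimately show ?thesis by (simp add: dist_real_def)
    next
      case 2
      then have "tvar \<gamma> a t = tvar \<gamma> a x' + tvar \<gamma> x' t" using tvar_add[of a x' t] t x' by simp
      moreover have "tvar \<gamma> x' t < e" using d2(2)[of x'] 2 x' by (auto simp: dist_real_def)
      moreover have "tvar \<gamma> x' t \<ge> 0" using tvar_nonneg[of x' t] 2 t x' by simp
      ultimately show ?thesis by (simp add: dist_real_def)
    qed (use e in simp)
  qed (use d1 d2 in auto)
qed

lemma tvar_small:
  assumes "e > 0"
  shows "\<exists>d>0. \<forall>x y. a \<le> x \<longrightarrow> x \<le> y \<longrightarrow> y \<le> b \<longrightarrow> y - x < d \<longrightarrow> tvar \<gamma> x y < e"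
proof -
  have "uniformly_continuous_on {a..b} (tvar \<gamma> a)"
    by (rule compact_uniformly_continuous[OF tvar_cont]) simp
  then obtain d where d: "d > 0" "\<And>x x'. x \<in> {a..b} \<Longrightarrow> x' \<in> {a..b} \<Longrightarrow> dist x' x < d \<Longrightarrow>
      dist (tvar \<gamma> a x') (tvar \<gamma> a x) < e"
    unfolding uniformly_continuous_on_def using assms by metis
  show ?thesis
  proof (intro exI[of _ d] conjI allI impI)
    fix x y assume h: "a \<le> x" "x \<le> y" "y \<le> b" "y - x < d"
    have "tvar \<gamma> a y = tvar \<gamma> a x + tvar \<gamma> x y" using tvar_add[of a x y] h by simp
    moreover have "dist (tvar \<gamma> a y) (tvar \<gamma> a x) < e" using d(2)[of x y] h by (simp add: dist_real_def)
    ultimately show "tvar \<gamma> x y < e" by (simp add: dist_real_def)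
  qed (use d in simp)
qed

end



lemma all_less_Suc_shift: "(\<forall>i<Suc n. P i) \<longleftrightarrow> P 0 \<and> (\<forall>i<n. P (Suc i))"
  by (auto simp: less_Suc_eq_0_disj)

fun rsum :: "(real \<Rightarrow> real) \<Rightarrow> (real \<Rightarrow> real) \<Rightarrow> real list \<Rightarrow> real list \<Rightarrow> real" where
  "rsum F g (x # y # r) (\<tau> # ts) = F \<tau> * (g y - g x) + rsum F g (y # r) ts"
| "rsum F g _ _ = 0"

fun mesh :: "real list \<Rightarrow> real \<Rightarrow> bool" where
  "mesh (x # y # r) d = (y - x < d \<and> mesh (y # r) d)"
| "mesh _ d = True"

lemma mesh_eq: "mesh_less xs d \<longleftrightarrow> mesh xs d"
proof (induction xs d rule: mesh.induct)
  case (1 x y r d)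
  have "mesh_less (x # y # r) d \<longleftrightarrow> (\<forall>i<Suc (length r). (x # y # r) ! Suc i - (x # y # r) ! i < d)"
    by (simp add: mesh_less_def)
  also have "\<dots> \<longleftrightarrow> y - x < d \<and> mesh_less (y # r) d"
    by (subst all_less_Suc_shift) (simp add: mesh_less_def)
  finally show ?case using 1 by simp
qed (auto simp: mesh_less_def)

lemma rs_sum_eq: "length ts = length xs - 1 \<Longrightarrow> rs_sum F g xs ts = rsum F g xs ts"
proof (induction F g xs ts rule: rsum.induct)
  case (1 F g x y r \<tau> ts)
  have "rs_sum F g (x # y # r) (\<tau> # ts) = (\<Sum>i<Suc (length r). F ((\<tau> # ts) ! i) * (g ((x # y # r) ! Suc i) - g ((x # y # r) ! i)))"
    by (simp add: rs_sum_def)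
  also have "\<dots> = F \<tau> * (g y - g x) + rs_sum F g (y # r) ts"
    by (subst sum.lessThan_Suc_shift) (simp add: rs_sum_def)
  finally show ?case using 1 by simp
qed (auto simp: rs_sum_def)

lemma tp_single: "tagged_partition a b [x] ts \<longleftrightarrow> x = a \<and> a = b \<and> ts = []"
  by (auto simp: tagged_partition_def)

lemma tp_Nil: "\<not> tagged_partition a b [] ts"
  by (auto simp: tagged_partition_def)

lemma tp_Cons2_Nil: "\<not> tagged_partition a b (x # y # r) []"
  by (auto simp: tagged_partition_def)

lemma tp_Cons2: "tagged_partition a b (x # y # r) (\<tau> # ts) \<longleftrightarrow>
   x = a \<and> a < y \<and> x \<le> \<tau> \<and> \<tau> \<le> y \<and> tagged_partition y b (y # r) ts"
proof -
  have "tagged_partition a b (x # y # r) (\<tau> # ts) \<longleftrightarrow> is_partition a b (x # y # r) \<and> length ts = length r \<and>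
     (\<forall>i<Suc (length ts). (x # y # r) ! i \<le> (\<tau> # ts) ! i \<and> (\<tau> # ts) ! i \<le> (x # y # r) ! Suc i)"
    by (simp add: tagged_partition_def)
  also have "\<dots> \<longleftrightarrow> x = a \<and> a < y \<and> is_partition y b (y # r) \<and> length ts = length r \<and> x \<le> \<tau> \<and> \<tau> \<le> y \<and>
     (\<forall>i<length ts. (y # r) ! i \<le> ts ! i \<and> ts ! i \<le> (y # r) ! Suc i)"
    by (subst all_less_Suc_shift) (auto simp: part_Cons2)
  finally show ?thesis by (auto simp: tagged_partition_def)
qed

lemma tp_rsum: "tagged_partition a b xs ts \<Longrightarrow> rs_sum F g xs ts = rsum F g xs ts"
  by (rule rs_sum_eq) (simp add: tagged_partition_def)

lemma tp_cases:
  assumes "tagged_partition a b xs ts"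
  obtains "xs = [a]" "ts = []" "a = b"
  | y r \<tau> ts' where "xs = a # y # r" "ts = \<tau> # ts'" "a < y" "a \<le> \<tau>" "\<tau> \<le> y" "tagged_partition y b (y # r) ts'"
  using assms
proof (cases xs rule: remdups_adj.cases)
  case 1 then show ?thesis using assms tp_Nil by auto
next
  case (2 x) then show ?thesis using assms that(1) by (auto simp: tp_single)
next
  case (3 x y r)
  then show ?thesis using assms that(2)
    by (cases ts) (auto simp: tp_Cons2 tp_Cons2_Nil)
qed

lemma tp_sets: "tagged_partition a b xs ts \<Longrightarrow> a \<le> b \<and> set xs \<subseteq> {a..b} \<and> set ts \<subseteq> {a..b}"
proof (induction xs arbitrary: a ts rule: induct_list012)
  case (3 x y zs)
  from 3(3) obtain \<tau> ts' where h: "ts = \<tau> # ts'" "x = a" "a < y" "a \<le> \<tau>" "\<tau> \<le> y"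
    "tagged_partition y b (y # zs) ts'"
    by (cases ts) (auto simp: tp_Cons2 tp_Cons2_Nil)
  from 3(2)[OF h(6)] have "y \<le> b \<and> set (y # zs) \<subseteq> {y..b} \<and> set ts' \<subseteq> {y..b}" .
  then show ?case using h by auto
qed (auto simp: tp_single tp_Nil)

lemma tp_concat:
  assumes "tagged_partition x y xs ts" "tagged_partition y z ys us"
  shows "tagged_partition x z (xs @ tl ys) (ts @ us) \<and>
         rsum F g (xs @ tl ys) (ts @ us) = rsum F g xs ts + rsum F g ys us \<and>
         (mesh xs d \<longrightarrow> mesh ys d \<longrightarrow> mesh (xs @ tl ys) d)"
  using assms
proof (induction xs arbitrary: x ts rule: induct_list012)
  case 1 then show ?case by (simp add: tp_Nil)
next
  case (2 u)
  then have "u = x" "x = y" "ts = []" by (auto simp: tp_single)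
  moreover from 2 have "ys = y # tl ys" by (cases ys) (auto simp: tagged_partition_def is_partition_def)
  ultimately have "[u] @ tl ys = ys" "ts @ us = us" by simp_all
  then show ?case using 2 \<open>u = x\<close> \<open>x = y\<close> \<open>ts = []\<close> by simp
next
  case (3 u v r)
  from 3(3) obtain \<tau> ts' where h: "ts = \<tau> # ts'" "u = x" "x < v" "x \<le> \<tau>" "\<tau> \<le> v" "tagged_partition v y (v # r) ts'"
    by (cases ts) (auto simp: tp_Cons2 tp_Cons2_Nil)
  have IH: "tagged_partition v z ((v # r) @ tl ys) (ts' @ us) \<and>
         rsum F g ((v # r) @ tl ys) (ts' @ us) = rsum F g (v # r) ts' + rsum F g ys us \<and>
         (mesh (v # r) d \<longrightarrow> mesh ys d \<longrightarrow> mesh ((v # r) @ tl ys) d)"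
    using 3(2)[OF h(6) 3(4)] .
  then show ?case using h by (simp add: tp_Cons2)
qed

lemma tp_exists_lt:
  assumes "d > 0"
  shows "\<forall>x. x < y \<longrightarrow> y - x \<le> real n * (d/2) \<longrightarrow> (\<exists>xs ts. tagged_partition x y xs ts \<and> mesh xs d)"
proof (induction n)
  case 0 then show ?case by auto
next
  case (Suc n)
  show ?case
  proof (intro allI impI)
    fix x assume x: "x < y" "y - x \<le> real (Suc n) * (d/2)"
    show "\<exists>xs ts. tagged_partition x y xs ts \<and> mesh xs d"
    proof (cases "y - x < d")
      case True
      then show ?thesis using x
        by (intro exI[of _ "[x,y]"] exI[of _ "[x]"]) (simp add: tp_Cons2 tp_single)
    next
      case False
      define x' where "x' = x + d/2"
      have x': "x < x'" "x' < y" "y - x' \<le> real n * (d/2)" using False x assms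
        by (auto simp: x'_def algebra_simps)
      then obtain xs ts where xs: "tagged_partition x' y xs ts" "mesh xs d" using Suc by blast
      then obtain r where r: "xs = x' # r"
        by (cases xs) (auto simp: tagged_partition_def is_partition_def)
      show ?thesis using xs r x' assms
        by (intro exI[of _ "x # xs"] exI[of _ "x # ts"]) (simp add: tp_Cons2 x'_def)
    qed
  qed
qed

lemma tp_exists:
  assumes "d > 0" "x \<le> y"
  shows "\<exists>xs ts. tagged_partition x y xs ts \<and> mesh xs d"
proof (cases "x = y")
  case True then show ?thesis by (intro exI[of _ "[x]"] exI[of _ "[]"]) (simp add: tp_single)
next
  case False
  have "\<exists>n. y - x < real n * (d/2)" using reals_Archimedean3[of "d/2"] assms(1) half_gt_zero by blast
  then obtain n where "y - x < real n * (d/2)" by blast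
  then show ?thesis using tp_exists_lt[OF assms(1), of y n] False assms by force
qed

fun wtag :: "real \<Rightarrow> real list \<Rightarrow> real list \<Rightarrow> bool" where
  "wtag d [x] [] = True"
| "wtag d (x # y # r) (\<tau> # ts) = (x < y \<and> y - d < \<tau> \<and> \<tau> \<le> y \<and> y - x < d \<and> wtag d (y # r) ts)"
| "wtag d _ _ = False"

lemma tp_wtag: "tagged_partition a b xs ts \<Longrightarrow> mesh xs d \<Longrightarrow> wtag d xs ts"
proof (induction xs arbitrary: a ts rule: induct_list012)
  case (3 x y zs)
  then show ?case by (cases ts) (auto simp: tp_Cons2 tp_Cons2_Nil)
qed (auto simp: tp_single tp_Nil)

lemma wtag_order: "wtag d xs ts \<Longrightarrow> xs \<noteq> [] \<and> (\<forall>z\<in>set xs. hd xs \<le> z \<and> z \<le> last xs)"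
proof (induction d xs ts rule: wtag.induct)
  case (2 d x y r \<tau> ts)
  then show ?case by fastforce
qed auto

lemma wtag_lt: "wtag d (x # y # r) ts \<Longrightarrow> x < last (x # y # r)"
  using wtag_order[of d "x # y # r" ts]
  by (cases ts) auto

context bvpath begin

lemma rsum_cauchy:
  assumes G: "\<And>x y. a \<le> x \<Longrightarrow> x \<le> y \<Longrightarrow> y \<le> b \<Longrightarrow> \<bar>g y - g x\<bar> \<le> tvar \<gamma> x y"
    and W: "\<And>u u'. u \<in> {a..b} \<Longrightarrow> u' \<in> {a..b} \<Longrightarrow> \<bar>u - u'\<bar> < 2 * d \<Longrightarrow> \<bar>F u - F u'\<bar> \<le> \<omega>"
  shows "wtag d xs ts \<Longrightarrow> wtag d ys us \<Longrightarrow> hd ys = hd xs \<Longrightarrow> last ys = last xs \<Longrightarrow>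
    set xs \<subseteq> {a..b} \<Longrightarrow> set ys \<subseteq> {a..b} \<Longrightarrow> set ts \<subseteq> {a..b} \<Longrightarrow> set us \<subseteq> {a..b} \<Longrightarrow>
    \<bar>rsum F g xs ts - rsum F g ys us\<bar> \<le> \<omega> * tvar \<gamma> (hd xs) (last xs)"
proof (induction "length xs + length ys" arbitrary: xs ys ts us rule: less_induct)
  case less
  note wx = less.prems(1) and wy = less.prems(2)
  show ?case
  proof (cases xs rule: remdups_adj.cases)
    case 1 then show ?thesis using wx by simp
  next
    case (2 x)
    show ?thesis
    proof (cases ys rule: remdups_adj.cases)
      case 1 then show ?thesis using wy by simp
    next
      case (2 y) then show ?thesis using \<open>xs = [x]\<close> wx wy by (cases ts; cases us) (auto simp: tvar_refl)
    next
      case (3 y q r)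
      then show ?thesis using wtag_lt[of d y q r us] wy less.prems(3,4) \<open>xs = [x]\<close> by simp
    qed
  next
    case (3 x p r)
    show ?thesis
    proof (cases ys rule: remdups_adj.cases)
      case 1 then show ?thesis using wy by simp
    next
      case (2 y)
      then show ?thesis using wtag_lt[of d x p r ts] wx less.prems(3,4) \<open>xs = x # p # r\<close> by simp
    next
      case (3 y q r')
      obtain \<tau> ts' where ts: "ts = \<tau> # ts'" using wx \<open>xs = x # p # r\<close> by (cases ts) auto
      obtain \<sigma> us' where us: "us = \<sigma> # us'" using wy \<open>ys = y # q # r'\<close> by (cases us) auto
      have yx: "y = x" using less.prems(3) \<open>xs = x # p # r\<close> \<open>ys = y # q # r'\<close> by simp
      have wx': "x < p" "p - d < \<tau>" "\<tau> \<le> p" "p - x < d" "wtag d (p # r) ts'"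
        using wx \<open>xs = x # p # r\<close> ts by auto
      have wy': "x < q" "q - d < \<sigma>" "\<tau> \<le> p" "q - x < d" "wtag d (q # r') us'" "\<sigma> \<le> q"
        using wy \<open>ys = y # q # r'\<close> us yx wx' by auto
      define z where "z = last xs"
      have lz: "last (p # r) = z" "last (q # r') = z"
        using less.prems(4) \<open>xs = x # p # r\<close> \<open>ys = y # q # r'\<close> by (auto simp: z_def)
      have ab: "a \<le> x" "x \<le> b" "a \<le> p" "p \<le> b" "a \<le> q" "q \<le> b" "\<tau> \<in> {a..b}" "\<sigma> \<in> {a..b}" "z \<in> {a..b}"
        using less.prems(5-8) \<open>xs = x # p # r\<close> \<open>ys = y # q # r'\<close> ts us yx last_in_set[of xs]
        by (auto simp: z_def)
      have pz: "p \<le> z" using wtag_order[OF wx'(5)] lz by simp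
      have qz: "q \<le> z" using wtag_order[OF wy'(5)] lz by simp
      have Fts: "\<bar>F \<tau> - F \<sigma>\<bar> \<le> \<omega>" using W[of \<tau> \<sigma>] ab wx' wy' by auto
      then have \<omega>0: "\<omega> \<ge> 0" by linarith
      have hz: "hd xs = x" using \<open>xs = x # p # r\<close> by simp
      consider "p = q" | "p < q" | "q < p" by linarith
      then show ?thesis
      proof cases
        case 1
        have IH: "\<bar>rsum F g (p # r) ts' - rsum F g (q # r') us'\<bar> \<le> \<omega> * tvar \<gamma> p z"
          using less.hyps[of "p # r" "q # r'" ts' us'] wx' wy' lz 1 less.prems(5-8)
            \<open>xs = x # p # r\<close> \<open>ys = y # q # r'\<close> ts us by auto
        have "\<bar>(F \<tau> - F \<sigma>) * (g p - g x)\<bar> \<le> \<omega> * tvar \<gamma> x p"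
          unfolding abs_mult using G[of x p] Fts \<omega>0 ab wx' by (intro mult_mono) auto
        moreover have "rsum F g xs ts - rsum F g ys us = (F \<tau> - F \<sigma>) * (g p - g x) +
            (rsum F g (p # r) ts' - rsum F g (q # r') us')"
          using \<open>xs = x # p # r\<close> \<open>ys = y # q # r'\<close> ts us yx 1 by (simp add: algebra_simps)
        moreover have "tvar \<gamma> x z = tvar \<gamma> x p + tvar \<gamma> p z" using tvar_add[of x p z] ab wx' pz by simp
        ultimately show ?thesis using IH hz by (simp add: z_def[symmetric] algebra_simps)
      next
        case 2
        have w2: "wtag d (p # q # r') (\<sigma> # us')" using wy' wx' 2 by auto
        have IH: "\<bar>rsum F g (p # r) ts' - rsum F g (p # q # r') (\<sigma> # us')\<bar> \<le> \<omega> * tvar \<gamma> p z"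
          using less.hyps[of "p # r" "p # q # r'" ts' "\<sigma> # us'"] wx' w2 lz less.prems(5-8)
            \<open>xs = x # p # r\<close> \<open>ys = y # q # r'\<close> ts us ab by auto
        have "\<bar>(F \<tau> - F \<sigma>) * (g p - g x)\<bar> \<le> \<omega> * tvar \<gamma> x p"
          unfolding abs_mult using G[of x p] Fts \<omega>0 ab wx' by (intro mult_mono) auto
        moreover have "rsum F g xs ts - rsum F g ys us = (F \<tau> - F \<sigma>) * (g p - g x) +
            (rsum F g (p # r) ts' - rsum F g (p # q # r') (\<sigma> # us'))"
          using \<open>xs = x # p # r\<close> \<open>ys = y # q # r'\<close> ts us yx by (simp add: algebra_simps)
        moreover have "tvar \<gamma> x z = tvar \<gamma> x p + tvar \<gamma> p z" using tvar_add[of x p z] ab wx' pz by simp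
        ultimately show ?thesis using IH hz by (simp add: z_def[symmetric] algebra_simps; linarith?)
      next
        case 3
        have w2: "wtag d (q # p # r) (\<tau> # ts')" using wx' wy' 3 by auto
        have IH: "\<bar>rsum F g (q # p # r) (\<tau> # ts') - rsum F g (q # r') us'\<bar> \<le> \<omega> * tvar \<gamma> q z"
          using less.hyps[of "q # p # r" "q # r'" "\<tau> # ts'" us'] wy' w2 lz less.prems(5-8)
            \<open>xs = x # p # r\<close> \<open>ys = y # q # r'\<close> ts us ab by auto
        have "\<bar>(F \<tau> - F \<sigma>) * (g q - g x)\<bar> \<le> \<omega> * tvar \<gamma> x q"
          unfolding abs_mult using G[of x q] Fts \<omega>0 ab wy' by (intro mult_mono) auto
        moreover have "rsum F g xs ts - rsum F g ys us = (F \<tau> - F \<sigma>) * (g q - g x) +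
            (rsum F g (q # p # r) (\<tau> # ts') - rsum F g (q # r') us')"
          using \<open>xs = x # p # r\<close> \<open>ys = y # q # r'\<close> ts us yx by (simp add: algebra_simps)
        moreover have "tvar \<gamma> x z = tvar \<gamma> x q + tvar \<gamma> q z" using tvar_add[of x q z] ab wy' qz by simp
        ultimately show ?thesis using IH hz by (simp add: z_def[symmetric] algebra_simps; linarith?)
      qed
    qed
  qed
qed

end



lemma mesh_mono: "mesh xs d \<Longrightarrow> d \<le> d' \<Longrightarrow> mesh xs d'"
  by (induction xs d rule: mesh.induct) auto

lemma tp_hd_last: "tagged_partition x t xs ts \<Longrightarrow> hd xs = x \<and> last xs = t"
  by (simp add: tagged_partition_def is_partition_def)

lemma pow_convex:
  fixes z z' :: real
  assumes "0 \<le> z" "z \<le> z'"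
  shows "real (Suc k) * z ^ k * (z' - z) \<le> z' ^ Suc k - z ^ Suc k"
proof -
  have "z' ^ Suc k - z ^ Suc k = (z' - z) * (\<Sum>i<Suc k. z ^ (Suc k - Suc i) * z' ^ i)"
    by (rule power_diff_sumr2)
  moreover have "real (card {..<Suc k}) * z ^ k \<le> (\<Sum>i<Suc k. z ^ (Suc k - Suc i) * z' ^ i)"
  proof (rule sum_bounded_below)
    fix i assume "i \<in> {..<Suc k}"
    then have "z ^ k = z ^ (Suc k - Suc i) * z ^ i" by (simp add: power_add[symmetric])
    also have "\<dots> \<le> z ^ (Suc k - Suc i) * z' ^ i"
      using assms by (intro mult_left_mono power_mono) auto
    finally show "z ^ k \<le> z ^ (Suc k - Suc i) * z' ^ i" .
  qed
  ultimately show ?thesis using assms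
    by (simp add: mult.commute mult.left_commute mult_left_mono)
qed

lemma pow_step:
  fixes z z' \<epsilon> :: real
  assumes "0 \<le> z" "z \<le> z'" "z' - z \<le> \<epsilon>"
  shows "z' ^ k * (z' - z) \<le> (z' ^ Suc k - z ^ Suc k) / real (Suc k) + \<epsilon> * (z' ^ k - z ^ k)"
proof -
  have "z ^ k * (z' - z) \<le> (z' ^ Suc k - z ^ Suc k) / real (Suc k)"
    using pow_convex[OF assms(1,2), of k] by (simp add: field_simps)
  moreover have "(z' ^ k - z ^ k) * (z' - z) \<le> (z' ^ k - z ^ k) * \<epsilon>"
    using assms power_mono[of z z' k] by (intro mult_left_mono) auto
  ultimately show ?thesis by (simp add: algebra_simps)
qed

context bvpath begin

lemma v_mono: "a \<le> x \<Longrightarrow> x \<le> y \<Longrightarrow> y \<le> b \<Longrightarrow> tvar \<gamma> a y - tvar \<gamma> a x = tvar \<gamma> x y"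
  using tvar_add[of a x y] by simp

lemma v_nonneg: "a \<le> x \<Longrightarrow> x \<le> b \<Longrightarrow> tvar \<gamma> a x \<ge> 0"
  using tvar_nonneg[of a x] by simp

lemma rsum_abs_le:
  assumes G: "\<And>x y. a \<le> x \<Longrightarrow> x \<le> y \<Longrightarrow> y \<le> b \<Longrightarrow> \<bar>g y - g x\<bar> \<le> tvar \<gamma> x y"
  shows "tagged_partition x t xs ts \<Longrightarrow> a \<le> x \<Longrightarrow> t \<le> b \<Longrightarrow>
    \<bar>rsum F g xs ts\<bar> \<le> rsum (\<lambda>u. \<bar>F u\<bar>) (tvar \<gamma> a) xs ts"
proof (induction xs arbitrary: x ts rule: induct_list012)
  case 1 then show ?case by (simp add: tp_Nil)
next
  case (2 u) then show ?case by (simp add: tp_single)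
next
  case (3 u y r)
  from 3(3) obtain \<tau> ts' where h: "ts = \<tau> # ts'" "u = x" "x < y" "x \<le> \<tau>" "\<tau> \<le> y"
    "tagged_partition y t (y # r) ts'"
    by (cases ts) (auto simp: tp_Cons2 tp_Cons2_Nil)
  have yt: "y \<le> t" using tp_sets[OF h(6)] by simp
  have IH: "\<bar>rsum F g (y # r) ts'\<bar> \<le> rsum (\<lambda>u. \<bar>F u\<bar>) (tvar \<gamma> a) (y # r) ts'"
    using 3(2)[OF h(6)] 3(4,5) h yt by simp
  have "\<bar>F \<tau> * (g y - g x)\<bar> \<le> \<bar>F \<tau>\<bar> * (tvar \<gamma> a y - tvar \<gamma> a x)"
    unfolding abs_mult using G[of x y] v_mono[of x y] 3(4,5) h yt by (intro mult_left_mono) auto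
  then show ?case using IH h by simp
qed

lemma rsum_const_le:
  assumes "\<And>u. u \<in> {a..b} \<Longrightarrow> H u \<le> M"
  shows "tagged_partition x t xs ts \<Longrightarrow> a \<le> x \<Longrightarrow> t \<le> b \<Longrightarrow>
    rsum H (tvar \<gamma> a) xs ts \<le> M * (tvar \<gamma> a t - tvar \<gamma> a x)"
proof (induction xs arbitrary: x ts rule: induct_list012)
  case 1 then show ?case by (simp add: tp_Nil)
next
  case (2 u) then show ?case by (simp add: tp_single)
next
  case (3 u y r)
  from 3(3) obtain \<tau> ts' where h: "ts = \<tau> # ts'" "u = x" "x < y" "x \<le> \<tau>" "\<tau> \<le> y"
    "tagged_partition y t (y # r) ts'"
    by (cases ts) (auto simp: tp_Cons2 tp_Cons2_Nil)
  have yt: "y \<le> t" using tp_sets[OF h(6)] by simp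
  have IH: "rsum H (tvar \<gamma> a) (y # r) ts' \<le> M * (tvar \<gamma> a t - tvar \<gamma> a y)"
    using 3(2)[OF h(6)] 3(4,5) h yt by simp
  have "H \<tau> * (tvar \<gamma> a y - tvar \<gamma> a x) \<le> M * (tvar \<gamma> a y - tvar \<gamma> a x)"
    using assms[of \<tau>] v_mono[of x y] tvar_nonneg[of x y] 3(4,5) h yt by (intro mult_right_mono) auto
  then show ?case using IH h by (simp add: algebra_simps)
qed

lemma rsum_pow_le:
  assumes H: "\<And>u. u \<in> {a..b} \<Longrightarrow> H u \<le> c * tvar \<gamma> a u ^ k" and c: "c \<ge> 0"
    and D: "\<And>p q. a \<le> p \<Longrightarrow> p \<le> q \<Longrightarrow> q \<le> b \<Longrightarrow> q - p < \<delta> \<Longrightarrow> tvar \<gamma> p q \<le> \<epsilon>"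
  shows "tagged_partition x t xs ts \<Longrightarrow> mesh xs \<delta> \<Longrightarrow> a \<le> x \<Longrightarrow> t \<le> b \<Longrightarrow>
    rsum H (tvar \<gamma> a) xs ts \<le> c * ((tvar \<gamma> a t ^ Suc k - tvar \<gamma> a x ^ Suc k) / real (Suc k)
       + \<epsilon> * (tvar \<gamma> a t ^ k - tvar \<gamma> a x ^ k))"
proof (induction xs arbitrary: x ts rule: induct_list012)
  case 1 then show ?case by (simp add: tp_Nil)
next
  case (2 u) then show ?case by (simp add: tp_single)
next
  case (3 u y r)
  from 3(3) obtain \<tau> ts' where h: "ts = \<tau> # ts'" "u = x" "x < y" "x \<le> \<tau>" "\<tau> \<le> y"
    "tagged_partition y t (y # r) ts'"
    by (cases ts) (auto simp: tp_Cons2 tp_Cons2_Nil)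
  have yt: "y \<le> t" using tp_sets[OF h(6)] by simp
  have ms: "y - x < \<delta>" "mesh (y # r) \<delta>" using 3(4) h by auto
  define vx where "vx = tvar \<gamma> a x"
  define vy where "vy = tvar \<gamma> a y"
  define vt where "vt = tvar \<gamma> a t"
  have IH: "rsum H (tvar \<gamma> a) (y # r) ts' \<le> c * ((vt ^ Suc k - vy ^ Suc k) / real (Suc k)
       + \<epsilon> * (vt ^ k - vy ^ k))"
    using 3(2)[OF h(6) ms(2)] 3(5,6) h yt by (simp add: vt_def vy_def)
  have vxy: "0 \<le> vx" "vx \<le> vy" "vy - vx \<le> \<epsilon>"
    using v_nonneg[of x] v_mono[of x y] tvar_nonneg[of x y] D[of x y] 3(5,6) h yt ms
    by (auto simp: vx_def vy_def)
  have vt: "tvar \<gamma> a \<tau> \<le> vy" "0 \<le> tvar \<gamma> a \<tau>"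
    using v_mono[of \<tau> y] tvar_nonneg[of \<tau> y] v_nonneg[of \<tau>] 3(5,6) h yt by (auto simp: vy_def)
  have "H \<tau> * (vy - vx) \<le> c * tvar \<gamma> a \<tau> ^ k * (vy - vx)"
    using H[of \<tau>] 3(5,6) h yt vxy by (intro mult_right_mono) auto
  also have "\<dots> \<le> c * vy ^ k * (vy - vx)"
    using vt vxy c by (intro mult_right_mono mult_left_mono power_mono) auto
  also have "\<dots> \<le> c * ((vy ^ Suc k - vx ^ Suc k) / real (Suc k) + \<epsilon> * (vy ^ k - vx ^ k))"
    using pow_step[OF vxy, of k] c by (simp add: mult.assoc mult_left_mono)
  finally have "H \<tau> * (vy - vx) \<le> c * ((vy ^ Suc k - vx ^ Suc k) / real (Suc k) + \<epsilon> * (vy ^ k - vx ^ k))" .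
  then have "rsum H (tvar \<gamma> a) (x # y # r) (\<tau> # ts') \<le>
     c * ((vy ^ Suc k - vx ^ Suc k) / real (Suc k) + \<epsilon> * (vy ^ k - vx ^ k)) +
     c * ((vt ^ Suc k - vy ^ Suc k) / real (Suc k) + \<epsilon> * (vt ^ k - vy ^ k))"
    using IH by (simp add: vx_def vy_def)
  also have "\<dots> = c * ((vt ^ Suc k - vx ^ Suc k) / real (Suc k) + \<epsilon> * (vt ^ k - vx ^ k))"
    unfolding diff_divide_distrib ring_distribs by linarith
  finally show ?case using h by (simp add: vt_def vx_def)
qed

end



lemma tri3: "\<bar>A - I\<bar> < e/2 \<Longrightarrow> \<bar>A + B - J\<bar> < e/2 \<Longrightarrow> \<bar>B\<bar> \<le> C \<Longrightarrow> \<bar>J - I\<bar> \<le> C + (e::real)"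
  by arith

lemma tri_a: "\<bar>x - s\<bar> \<le> e/2 \<Longrightarrow> \<bar>s - I\<bar> < e/2 \<Longrightarrow> \<bar>x - I\<bar> < (e::real)"
  by arith

lemma abs_b: "\<bar>x - I\<bar> < e/2 \<Longrightarrow> \<bar>x\<bar> \<le> B \<Longrightarrow> \<bar>I\<bar> \<le> B + (e::real)/2"
  by arith

lemma tri2: "\<bar>s - I\<bar> < X/2 \<Longrightarrow> \<bar>s - J\<bar> < X/2 \<Longrightarrow> X = \<bar>I - J\<bar> \<Longrightarrow> False" for s I J X :: real
  by arith

lemma rs_unique:
  assumes "x \<le> t" "has_rs_integral F g x t I" "has_rs_integral F g x t J"
  shows "I = J"
proof (rule ccontr)
  assume "I \<noteq> J"
  define e where "e = \<bar>I - J\<bar> / 2"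
  have e: "e > 0" using \<open>I \<noteq> J\<close> by (simp add: e_def)
  obtain d1 where d1: "d1 > 0" "\<And>xs ts. tagged_partition x t xs ts \<and> mesh_less xs d1 \<Longrightarrow> \<bar>rs_sum F g xs ts - I\<bar> < e"
    using assms(2) e unfolding has_rs_integral_def by blast
  obtain d2 where d2: "d2 > 0" "\<And>xs ts. tagged_partition x t xs ts \<and> mesh_less xs d2 \<Longrightarrow> \<bar>rs_sum F g xs ts - J\<bar> < e"
    using assms(3) e unfolding has_rs_integral_def by blast
  obtain xs ts where p: "tagged_partition x t xs ts" "mesh xs (min d1 d2)"
    using tp_exists[of "min d1 d2" x t] d1 d2 assms(1) by auto
  have "mesh_less xs d1" "mesh_less xs d2" using p mesh_mono[OF p(2)] by (auto simp: mesh_eq)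
  then have "\<bar>rs_sum F g xs ts - I\<bar> < e" "\<bar>rs_sum F g xs ts - J\<bar> < e" using d1 d2 p by auto
  then show False unfolding e_def using tri2 by blast
qed

lemma rs_integral_eq:
  assumes "x \<le> t" "has_rs_integral F g x t I"
  shows "rs_integral F g x t = I"
  unfolding rs_integral_def
proof (rule the_equality)
  show "has_rs_integral F g x t I" by (rule assms(2))
next
  fix J assume "has_rs_integral F g x t J"
  then show "J = I" using rs_unique[OF assms(1)] assms(2) by blast
qed

context bvpath begin

lemma rs_exists:
  assumes G: "\<And>x y. a \<le> x \<Longrightarrow> x \<le> y \<Longrightarrow> y \<le> b \<Longrightarrow> \<bar>g y - g x\<bar> \<le> tvar \<gamma> x y"
    and Fc: "continuous_on {a..b} F" and xt: "a \<le> x" "x \<le> t" "t \<le> b"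
  shows "\<exists>I. has_rs_integral F g x t I"
proof -
  define T where "T = tvar \<gamma> x t"
  have T0: "T \<ge> 0" using tvar_nonneg xt by (simp add: T_def)
  have uc: "uniformly_continuous_on {a..b} F"
    by (rule compact_uniformly_continuous[OF Fc]) simp
  have K: "\<exists>d>0. \<forall>xs ts ys us. tagged_partition x t xs ts \<longrightarrow> mesh xs d \<longrightarrow>
      tagged_partition x t ys us \<longrightarrow> mesh ys d \<longrightarrow> \<bar>rsum F g xs ts - rsum F g ys us\<bar> \<le> e" if e: "e > 0" for e
  proof -
    define \<omega> where "\<omega> = e / (T + 1)"
    have \<omega>: "\<omega> > 0" using e T0 by (simp add: \<omega>_def)
    obtain d' where d': "d' > 0" "\<And>u u'. u \<in> {a..b} \<Longrightarrow> u' \<in> {a..b} \<Longrightarrow> dist u' u < d' \<Longrightarrow> dist (F u') (F u) < \<omega>"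
      using uc \<omega> unfolding uniformly_continuous_on_def by metis
    have W: "\<bar>F u - F u'\<bar> \<le> \<omega>" if "u \<in> {a..b}" "u' \<in> {a..b}" "\<bar>u - u'\<bar> < 2 * (d'/2)" for u u'
      using d'(2)[of u' u] that by (simp add: dist_real_def)
    have \<omega>T: "\<omega> * T \<le> e"
      using e T0 by (simp add: \<omega>_def field_simps)
    show ?thesis
    proof (intro exI[of _ "d'/2"] conjI allI impI)
      fix xs ts ys us
      assume h: "tagged_partition x t xs ts" "mesh xs (d'/2)" "tagged_partition x t ys us" "mesh ys (d'/2)"
      have w1: "wtag (d'/2) xs ts" by (rule tp_wtag[OF h(1,2)])
      have w2: "wtag (d'/2) ys us" by (rule tp_wtag[OF h(3,4)])
      have hl: "hd ys = hd xs" "last ys = last xs" using tp_hd_last[OF h(1)] tp_hd_last[OF h(3)] by auto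
      have s1: "set xs \<subseteq> {a..b}" "set ts \<subseteq> {a..b}" using tp_sets[OF h(1)] xt by auto
      have s2: "set ys \<subseteq> {a..b}" "set us \<subseteq> {a..b}" using tp_sets[OF h(3)] xt by auto
      have "\<bar>rsum F g xs ts - rsum F g ys us\<bar> \<le> \<omega> * tvar \<gamma> (hd xs) (last xs)"
        by (rule rsum_cauchy[OF G W w1 w2 hl s1(1) s2(1) s1(2) s2(2)])
      then show "\<bar>rsum F g xs ts - rsum F g ys us\<bar> \<le> e"
        using tp_hd_last[OF h(1)] \<omega>T by (simp add: T_def)
    qed (use d' in simp)
  qed
  have "\<forall>n. \<exists>p. tagged_partition x t (fst p) (snd p) \<and> mesh (fst p) (inverse (real (Suc n)))"
    using tp_exists xt by simp
  then obtain P where P: "\<And>n. tagged_partition x t (fst (P n)) (snd (P n)) \<and> mesh (fst (P n)) (inverse (real (Suc n)))"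
    by metis
  define S where "S n = rsum F g (fst (P n)) (snd (P n))" for n
  have fine: "mesh (fst (P n)) d" if "inverse (real (Suc N)) < d" "N \<le> n" for n N d
  proof -
    have "inverse (real (Suc n)) \<le> inverse (real (Suc N))" using that(2)
      by (simp add: le_imp_inverse_le)
    then have "inverse (real (Suc n)) \<le> d" using that(1) by linarith
    then show ?thesis using mesh_mono P[of n] by blast
  qed
  have "Cauchy S"
  proof (rule CauchyI)
    fix e :: real assume e: "e > 0"
    obtain d where d: "d > 0" "\<And>xs ts ys us. tagged_partition x t xs ts \<Longrightarrow> mesh xs d \<Longrightarrow>
      tagged_partition x t ys us \<Longrightarrow> mesh ys d \<Longrightarrow> \<bar>rsum F g xs ts - rsum F g ys us\<bar> \<le> e/2"
      using K[of "e/2"] e by auto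
    obtain N where N: "inverse (real (Suc N)) < d" using reals_Archimedean d by blast
    show "\<exists>M. \<forall>m\<ge>M. \<forall>n\<ge>M. norm (S m - S n) < e"
    proof (intro exI allI impI)
      fix m n assume "N \<le> m" "N \<le> n"
      then have "\<bar>S m - S n\<bar> \<le> e/2" unfolding S_def using d(2) P fine N by blast
      then show "norm (S m - S n) < e" using e by simp
    qed
  qed
  then obtain I where I: "S \<longlonglongrightarrow> I" using Cauchy_convergent_iff convergent_def by blast
  have "has_rs_integral F g x t I"
    unfolding has_rs_integral_def
  proof (intro allI impI)
    fix e :: real assume e: "e > 0"
    obtain d where d: "d > 0" "\<And>xs ts ys us. tagged_partition x t xs ts \<Longrightarrow> mesh xs d \<Longrightarrow>
      tagged_partition x t ys us \<Longrightarrow> mesh ys d \<Longrightarrow> \<bar>rsum F g xs ts - rsum F g ys us\<bar> \<le> e/2"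
      using K[of "e/2"] e by auto
    obtain N1 where N1: "inverse (real (Suc N1)) < d" using reals_Archimedean d by blast
    obtain N2 where N2: "\<And>n. n \<ge> N2 \<Longrightarrow> norm (S n - I) < e/2" using LIMSEQ_D[OF I, of "e/2"] e by auto
    define n where "n = max N1 N2"
    show "\<exists>d>0. \<forall>xs ts. tagged_partition x t xs ts \<and> mesh_less xs d \<longrightarrow> \<bar>rs_sum F g xs ts - I\<bar> < e"
    proof (intro exI[of _ d] conjI allI impI)
      fix xs ts assume h: "tagged_partition x t xs ts \<and> mesh_less xs d"
      have "\<bar>rsum F g xs ts - S n\<bar> \<le> e/2"
        unfolding S_def using d(2) h P[of n] fine[OF N1, of n] by (auto simp: mesh_eq n_def)
      moreover have "\<bar>S n - I\<bar> < e/2" using N2[of n] by (simp add: n_def)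
      moreover have "rs_sum F g xs ts = rsum F g xs ts" using tp_rsum h by blast
      ultimately show "\<bar>rs_sum F g xs ts - I\<bar> < e" using tri_a by metis
    qed (use d in simp)
  qed
  then show ?thesis by blast
qed

lemma rs_bound:
  assumes G: "\<And>x y. a \<le> x \<Longrightarrow> x \<le> y \<Longrightarrow> y \<le> b \<Longrightarrow> \<bar>g y - g x\<bar> \<le> tvar \<gamma> x y"
    and I: "has_rs_integral F g a t I" and t: "a \<le> t" "t \<le> b"
    and Fb: "\<And>u. u \<in> {a..b} \<Longrightarrow> \<bar>F u\<bar> \<le> c * tvar \<gamma> a u ^ k" and c: "c \<ge> 0"
  shows "\<bar>I\<bar> \<le> c * tvar \<gamma> a t ^ Suc k / real (Suc k)"
proof (rule field_le_epsilon)
  fix e :: real assume e: "e > 0"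
  define vt where "vt = tvar \<gamma> a t"
  have vt0: "vt \<ge> 0" using v_nonneg t by (simp add: vt_def)
  define \<epsilon> where "\<epsilon> = e / (2 * (c * vt ^ k + 1))"
  have "c * vt ^ k \<ge> 0" using c vt0 by simp
  then have \<epsilon>: "\<epsilon> > 0" using e by (simp add: \<epsilon>_def zero_less_divide_iff)
  have c\<epsilon>: "c * (\<epsilon> * vt ^ k) \<le> e / 2"
  proof -
    define X where "X = c * vt ^ k"
    have X0: "X \<ge> 0" using c vt0 by (simp add: X_def)
    have "c * (\<epsilon> * vt ^ k) = e / 2 * (X / (X + 1))" using X0 by (simp add: \<epsilon>_def X_def field_simps)
    moreover have "X / (X + 1) \<le> 1" using X0 by simp
    moreover have "e / 2 * (X / (X + 1)) \<le> e / 2" using e \<open>X / (X + 1) \<le> 1\<close> by (intro mult_left_le) auto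
    ultimately show ?thesis by simp
  qed
  obtain \<delta>1 where \<delta>1: "\<delta>1 > 0" "\<And>p q. a \<le> p \<Longrightarrow> p \<le> q \<Longrightarrow> q \<le> b \<Longrightarrow> q - p < \<delta>1 \<Longrightarrow> tvar \<gamma> p q < \<epsilon>"
    using tvar_small[OF \<epsilon>] by blast
  obtain \<delta>2 where \<delta>2: "\<delta>2 > 0" "\<And>xs ts. tagged_partition a t xs ts \<and> mesh_less xs \<delta>2 \<Longrightarrow> \<bar>rs_sum F g xs ts - I\<bar> < e/2"
    using I e unfolding has_rs_integral_def by (meson half_gt_zero)
  obtain xs ts where p: "tagged_partition a t xs ts" "mesh xs (min \<delta>1 \<delta>2)"
    using tp_exists[of "min \<delta>1 \<delta>2" a t] \<delta>1 \<delta>2 t by auto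
  have m1: "mesh xs \<delta>1" and m2: "mesh_less xs \<delta>2" using p mesh_mono[OF p(2)] by (auto simp: mesh_eq)
  have eq: "rs_sum F g xs ts = rsum F g xs ts" by (rule tp_rsum[OF p(1)])
  have "\<bar>rsum F g xs ts - I\<bar> < e/2" using \<delta>2(2)[of xs ts] p(1) m2 eq by simp
  moreover have "\<bar>rsum F g xs ts\<bar> \<le> rsum (\<lambda>u. \<bar>F u\<bar>) (tvar \<gamma> a) xs ts"
    using rsum_abs_le[OF G p(1)] t by simp
  moreover have "rsum (\<lambda>u. \<bar>F u\<bar>) (tvar \<gamma> a) xs ts \<le> c * ((tvar \<gamma> a t ^ Suc k - tvar \<gamma> a a ^ Suc k) / real (Suc k)
       + \<epsilon> * (tvar \<gamma> a t ^ k - tvar \<gamma> a a ^ k))"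
  proof -
    have D: "\<And>p q. a \<le> p \<Longrightarrow> p \<le> q \<Longrightarrow> q \<le> b \<Longrightarrow> q - p < \<delta>1 \<Longrightarrow> tvar \<gamma> p q \<le> \<epsilon>"
      using \<delta>1(2) by (meson less_imp_le)
    show ?thesis by (rule rsum_pow_le[OF Fb c D p(1) m1 order_refl t(2)])
  qed
  moreover have "tvar \<gamma> a a = 0" by (rule tvar_refl)
  ultimately have "\<bar>I\<bar> \<le> c * ((tvar \<gamma> a t ^ Suc k - tvar \<gamma> a a ^ Suc k) / real (Suc k)
       + \<epsilon> * (tvar \<gamma> a t ^ k - tvar \<gamma> a a ^ k)) + e/2"
    using abs_b order_trans by metis
  then have "\<bar>I\<bar> \<le> c * (vt ^ Suc k / real (Suc k) + \<epsilon> * (vt ^ k - 0 ^ k)) + e/2"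
    by (simp add: vt_def tvar_refl)
  also have "\<dots> \<le> c * (vt ^ Suc k / real (Suc k)) + c * (\<epsilon> * vt ^ k) + e/2"
    using c \<epsilon> by (cases k) (auto simp: ring_distribs)
  finally show "\<bar>I\<bar> \<le> c * tvar \<gamma> a t ^ Suc k / real (Suc k) + e" using c\<epsilon> by (simp add: vt_def)
qed

lemma rs_incr:
  assumes G: "\<And>x y. a \<le> x \<Longrightarrow> x \<le> y \<Longrightarrow> y \<le> b \<Longrightarrow> \<bar>g y - g x\<bar> \<le> tvar \<gamma> x y"
    and I: "has_rs_integral F g a t I" and J: "has_rs_integral F g a t' J"
    and t: "a \<le> t" "t \<le> t'" "t' \<le> b"
    and Fb: "\<And>u. u \<in> {a..b} \<Longrightarrow> \<bar>F u\<bar> \<le> M"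
  shows "\<bar>J - I\<bar> \<le> M * tvar \<gamma> t t'"
proof (rule field_le_epsilon)
  fix e :: real assume e: "e > 0"
  obtain d1 where d1: "d1 > 0" "\<And>xs ts. tagged_partition a t xs ts \<and> mesh_less xs d1 \<Longrightarrow> \<bar>rs_sum F g xs ts - I\<bar> < e/2"
    using I e unfolding has_rs_integral_def by (meson half_gt_zero)
  obtain d2 where d2: "d2 > 0" "\<And>xs ts. tagged_partition a t' xs ts \<and> mesh_less xs d2 \<Longrightarrow> \<bar>rs_sum F g xs ts - J\<bar> < e/2"
    using J e unfolding has_rs_integral_def by (meson half_gt_zero)
  obtain xs ts where p: "tagged_partition a t xs ts" "mesh xs (min d1 d2)"
    using tp_exists[of "min d1 d2" a t] d1 d2 t by auto
  obtain ys us where q: "tagged_partition t t' ys us" "mesh ys (min d1 d2)"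
    using tp_exists[of "min d1 d2" t t'] d1 d2 t by auto
  have c: "tagged_partition a t' (xs @ tl ys) (ts @ us)"
     "rsum F g (xs @ tl ys) (ts @ us) = rsum F g xs ts + rsum F g ys us"
     "mesh (xs @ tl ys) (min d1 d2)"
    using tp_concat[OF p(1) q(1), of F g "min d1 d2"] p q by auto
  have m1: "mesh_less xs d1" using mesh_mono[OF p(2)] by (simp add: mesh_eq)
  have m2: "mesh_less (xs @ tl ys) d2" using mesh_mono[OF c(3)] by (simp add: mesh_eq)
  have eq1: "rs_sum F g xs ts = rsum F g xs ts" by (rule tp_rsum[OF p(1)])
  have eq2: "rs_sum F g (xs @ tl ys) (ts @ us) = rsum F g (xs @ tl ys) (ts @ us)" by (rule tp_rsum[OF c(1)])
  have "\<bar>rsum F g xs ts - I\<bar> < e/2"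
    using d1(2)[of xs ts] p(1) m1 eq1 by simp
  moreover have "\<bar>rsum F g (xs @ tl ys) (ts @ us) - J\<bar> < e/2"
    using d2(2)[of "xs @ tl ys" "ts @ us"] c(1) m2 eq2 by simp
  moreover have "\<bar>rsum F g ys us\<bar> \<le> rsum (\<lambda>u. \<bar>F u\<bar>) (tvar \<gamma> a) ys us"
    using rsum_abs_le[OF G q(1)] t by simp
  moreover have "rsum (\<lambda>u. \<bar>F u\<bar>) (tvar \<gamma> a) ys us \<le> M * (tvar \<gamma> a t' - tvar \<gamma> a t)"
    using rsum_const_le[of "\<lambda>u. \<bar>F u\<bar>" M, OF Fb q(1)] t by simp
  moreover have "tvar \<gamma> a t' - tvar \<gamma> a t = tvar \<gamma> t t'" using v_mono t by simp
  ultimately show "\<bar>J - I\<bar> \<le> M * tvar \<gamma> t t' + e" using c(2) tri3[of "rsum F g xs ts" I e "rsum F g ys us" J] by simp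
qed

end



lemma sig_props:
  fixes \<gamma> :: "real \<Rightarrow> 'v::euclidean_space"
  assumes bp: "bvpath \<gamma> a b"
  shows "set w \<subseteq> Basis \<Longrightarrow> continuous_on {a..b} (sig_coord \<gamma> a w) \<and>
    (\<forall>u\<in>{a..b}. \<bar>sig_coord \<gamma> a w u\<bar> \<le> tvar \<gamma> a u ^ length w / fact (length w))"
proof (induction w)
  case Nil
  then show ?case by simp
next
  case (Cons i w)
  interpret bvpath \<gamma> a b by (rule bp)
  define k where "k = length w"
  define F where "F = sig_coord \<gamma> a w"
  define g where "g = (\<lambda>u. \<gamma> u \<bullet> i)"
  have i: "i \<in> Basis" using Cons.prems by simp
  have IH: "continuous_on {a..b} F" "\<And>u. u \<in> {a..b} \<Longrightarrow> \<bar>F u\<bar> \<le> tvar \<gamma> a u ^ k / fact k"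
    using Cons by (auto simp: F_def k_def)
  have G: "\<bar>g y - g x\<bar> \<le> tvar \<gamma> x y" if "a \<le> x" "x \<le> y" "y \<le> b" for x y
  proof -
    have "\<bar>g y - g x\<bar> = \<bar>(\<gamma> y - \<gamma> x) \<bullet> i\<bar>" by (simp add: g_def inner_diff_left)
    also have "\<dots> \<le> norm (\<gamma> y - \<gamma> x)" by (rule Basis_le_norm[OF i])
    also have "\<dots> \<le> tvar \<gamma> x y" by (rule norm_le_tvar[OF that])
    finally show ?thesis .
  qed
  have ex: "\<exists>I. has_rs_integral F g a t I" if "t \<in> {a..b}" for t
    using rs_exists[OF G IH(1), of a t] that by auto
  have sc: "sig_coord \<gamma> a (i # w) t = rs_integral F g a t" for t
    by (simp add: F_def g_def)
  have hs: "has_rs_integral F g a t (sig_coord \<gamma> a (i # w) t)" if t: "t \<in> {a..b}" for t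
  proof -
    obtain I where I: "has_rs_integral F g a t I" using ex[OF t] by blast
    then have "rs_integral F g a t = I" using rs_integral_eq t by auto
    then show ?thesis using I sc by simp
  qed
  have Fb: "\<bar>F u\<bar> \<le> (1 / fact k) * tvar \<gamma> a u ^ k" if "u \<in> {a..b}" for u
    using IH(2)[OF that] by simp
  have bound: "\<bar>sig_coord \<gamma> a (i # w) t\<bar> \<le> tvar \<gamma> a t ^ length (i # w) / fact (length (i # w))"
    if "t \<in> {a..b}" for t
  proof -
    have t: "a \<le> t" "t \<le> b" using that by auto
    have c: "(0::real) \<le> 1 / fact k" by simp
    have "\<bar>sig_coord \<gamma> a (i # w) t\<bar> \<le> (1 / fact k) * tvar \<gamma> a t ^ Suc k / real (Suc k)"
      by (rule rs_bound[OF G hs[OF that] t Fb c])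
    also have "\<dots> = tvar \<gamma> a t ^ Suc k / fact (Suc k)" by (simp add: field_simps)
    finally show ?thesis by (simp add: k_def)
  qed
  define M where "M = \<bar>tvar \<gamma> a b\<bar> ^ k / fact k + 1"
  have Mb: "\<bar>F u\<bar> \<le> M" if "u \<in> {a..b}" for u
  proof -
    have "tvar \<gamma> a u \<le> tvar \<gamma> a b" "0 \<le> tvar \<gamma> a u" using tvar_mono[of a u b] v_nonneg[of u] that by auto
    then have "tvar \<gamma> a u ^ k / fact k \<le> \<bar>tvar \<gamma> a b\<bar> ^ k / fact k"
      by (intro divide_right_mono power_mono) auto
    then show ?thesis using IH(2)[OF that] by (simp add: M_def)
  qed
  have "0 \<le> \<bar>tvar \<gamma> a b\<bar> ^ k / fact k" by simp
  then have M0: "M > 0" unfolding M_def by linarith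
  have incr: "\<bar>sig_coord \<gamma> a (i # w) t' - sig_coord \<gamma> a (i # w) t\<bar> \<le> M * tvar \<gamma> t t'"
    if "a \<le> t" "t \<le> t'" "t' \<le> b" for t t'
  proof -
    have h1: "has_rs_integral F g a t (sig_coord \<gamma> a (i # w) t)" using hs that by auto
    have h2: "has_rs_integral F g a t' (sig_coord \<gamma> a (i # w) t')" using hs that by auto
    show ?thesis by (rule rs_incr[OF G h1 h2 that Mb])
  qed
  have cont: "continuous_on {a..b} (sig_coord \<gamma> a (i # w))"
    unfolding continuous_on_iff
  proof (intro ballI allI impI)
    fix t e :: real assume t: "t \<in> {a..b}" and e: "e > 0"
    obtain d where d: "d > 0" "\<And>x y. a \<le> x \<Longrightarrow> x \<le> y \<Longrightarrow> y \<le> b \<Longrightarrow> y - x < d \<Longrightarrow> tvar \<gamma> x y < e / M"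
      using tvar_small[of "e / M"] e M0 by auto
    show "\<exists>d>0. \<forall>x'\<in>{a..b}. dist x' t < d \<longrightarrow> dist (sig_coord \<gamma> a (i # w) x') (sig_coord \<gamma> a (i # w) t) < e"
    proof (intro exI[of _ d] conjI ballI impI)
      fix x' assume x': "x' \<in> {a..b}" "dist x' t < d"
      have "M * (e / M) = e" using M0 by simp
      show "dist (sig_coord \<gamma> a (i # w) x') (sig_coord \<gamma> a (i # w) t) < e"
      proof (cases "t \<le> x'")
        case True
        have "\<bar>sig_coord \<gamma> a (i # w) x' - sig_coord \<gamma> a (i # w) t\<bar> \<le> M * tvar \<gamma> t x'"
          using incr[of t x'] t x' True by auto
        also have "\<dots> < M * (e / M)"
          using d(2)[of t x'] t x' True M0 by (auto simp: dist_real_def pos_less_divide_eq mult.commute)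
        finally show ?thesis using M0 by (simp add: dist_real_def)
      next
        case False
        have "\<bar>sig_coord \<gamma> a (i # w) t - sig_coord \<gamma> a (i # w) x'\<bar> \<le> M * tvar \<gamma> x' t"
          using incr[of x' t] t x' False by auto
        also have "\<dots> < M * (e / M)"
          using d(2)[of x' t] t x' False M0 by (auto simp: dist_real_def pos_less_divide_eq mult.commute)
        finally show ?thesis using M0 by (simp add: dist_real_def abs_minus_commute)
      qed
    qed (use d in simp)
  qed
  show ?case using cont bound by blast
qed

lemma sig_coord_le:
  fixes \<gamma> :: "real \<Rightarrow> 'v::euclidean_space"
  assumes bp: "bvpath \<gamma> a b" and w: "w \<in> words k" and u: "u \<in> {a..b}"
  shows "\<bar>sig_coord \<gamma> a w u\<bar> \<le> tvar \<gamma> a b ^ k / fact k"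
proof -
  interpret bvpath \<gamma> a b by (rule bp)
  have "\<bar>sig_coord \<gamma> a w u\<bar> \<le> tvar \<gamma> a u ^ k / fact k"
    using sig_props[OF bp, of w] w u by (auto simp: words_def)
  also have "\<dots> \<le> tvar \<gamma> a b ^ k / fact k"
    using tvar_mono[of a u b] v_nonneg[of u] u by (intro divide_right_mono power_mono) auto
  finally show ?thesis .
qed

lemma words_card: "finite (words k :: 'v::euclidean_space list set)" "card (words k :: 'v list set) = DIM('v) ^ k"
  unfolding words_def by (auto intro: finite_lists_length_eq card_lists_length_eq)

lemma sig_ip_le:
  fixes \<gamma> \<sigma> :: "real \<Rightarrow> 'v::euclidean_space"
  assumes "bvpath \<gamma> a b" "bvpath \<sigma> a b" "s \<in> {a..b}" "t \<in> {a..b}"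
  shows "\<bar>sig_ip \<gamma> \<sigma> a k s t\<bar> \<le> (real DIM('v) * tvar \<gamma> a b * tvar \<sigma> a b) ^ k / fact k"
proof -
  define A where "A = tvar \<gamma> a b ^ k / fact k"
  define B where "B = tvar \<sigma> a b ^ k / fact k"
  have A0: "A \<ge> 0" "B \<ge> 0"
    using bvpath.tvar_nonneg[OF assms(1), of a b] bvpath.tvar_nonneg[OF assms(2), of a b] assms(3)
    by (auto simp: A_def B_def)
  have "\<bar>sig_ip \<gamma> \<sigma> a k s t\<bar> \<le> (\<Sum>w\<in>words k. \<bar>sig_coord \<gamma> a w s * sig_coord \<sigma> a w t\<bar>)"
    unfolding sig_ip_def by (rule sum_abs)
  also have "\<dots> \<le> (\<Sum>w\<in>(words k :: 'v list set). A * B)"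
    unfolding abs_mult
    using sig_coord_le[OF assms(1) _ assms(3)] sig_coord_le[OF assms(2) _ assms(4)] A0
    by (intro sum_mono mult_mono) (auto simp: A_def B_def)
  also have "\<dots> = real DIM('v) ^ k * A * B" using words_card(2)[where 'v='v] by simp
  also have "\<dots> = (real DIM('v) * tvar \<gamma> a b * tvar \<sigma> a b) ^ k / fact k / fact k"
    by (simp add: A_def B_def power_mult_distrib)
  also have "\<dots> \<le> (real DIM('v) * tvar \<gamma> a b * tvar \<sigma> a b) ^ k / fact k / 1"
    using A0 bvpath.tvar_nonneg[OF assms(1), of a b] bvpath.tvar_nonneg[OF assms(2), of a b] assms(3)
    by (intro divide_left_mono) (auto simp: fact_ge_1)
  finally show ?thesis by simp
qed




lemma fourier_setup:
  fixes f :: "real \<Rightarrow> complex"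
  assumes fi: "f integrable_on {-pi..pi}" and fb: "bounded (f ` {-pi<..<pi})"
  shows "(\<lambda>x. norm (f x)) integrable_on {-pi<..<pi}"
    and "\<And>h. continuous_on {-pi<..<pi} h \<Longrightarrow> bounded (h ` {-pi<..<pi}) \<Longrightarrow>
          (\<lambda>x. h x * f x) integrable_on {-pi<..<pi}"
proof -
  define S where "S = {-pi<..<pi}"
  have Sl: "S \<in> sets lebesgue" by (simp add: S_def)
  have fS: "f integrable_on S" using fi by (simp add: S_def integrable_on_open_interval_real)
  have fm: "f \<in> borel_measurable (lebesgue_on S)" by (rule integrable_imp_measurable[OF fS])
  obtain B where B: "\<And>x. x \<in> S \<Longrightarrow> norm (f x) \<le> B" using fb unfolding bounded_iff S_def by blast
  have cS: "(\<lambda>x. B) integrable_on S"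
    using integrable_const_ivl[of B "-pi" pi] by (simp add: S_def integrable_on_open_interval_real)
  have fa: "f absolutely_integrable_on S"
    by (rule measurable_bounded_by_integrable_imp_absolutely_integrable[OF fm Sl cS B])
  then show "(\<lambda>x. norm (f x)) integrable_on {-pi<..<pi}"
    unfolding absolutely_integrable_on_def S_def by simp
  fix h :: "real \<Rightarrow> complex"
  assume hc: "continuous_on {-pi<..<pi} h" and hb: "bounded (h ` {-pi<..<pi})"
  have hm: "h \<in> borel_measurable (lebesgue_on S)"
    using continuous_imp_measurable_on_sets_lebesgue[OF hc] Sl by (simp add: S_def)
  have "(\<lambda>x. h x * f x) absolutely_integrable_on S"
    by (rule absolutely_integrable_bounded_measurable_product[OF bilinear_times hm Sl _ fa])
       (use hb in \<open>simp add: S_def\<close>)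
  then show "(\<lambda>x. h x * f x) integrable_on {-pi<..<pi}"
    unfolding absolutely_integrable_on_def S_def by simp
qed

lemma exp_bounded:
  fixes c :: real
  shows "continuous_on A (\<lambda>x::real. exp (\<i> * of_real (c * x)) ^ n)"
    and "bounded ((\<lambda>x::real. exp (\<i> * of_real (c * x)) ^ n) ` A)"
    and "norm (exp (\<i> * of_real (c * x)) ^ n) = 1"
proof -
  show "continuous_on A (\<lambda>x::real. exp (\<i> * of_real (c * x)) ^ n)"
    by (intro continuous_intros)
  have n1: "norm (exp (\<i> * of_real (c * y)) ^ n) = 1" for y
    by (simp add: norm_power norm_exp_eq_Re)
  then show "norm (exp (\<i> * of_real (c * x)) ^ n) = 1" .
  show "bounded ((\<lambda>x::real. exp (\<i> * of_real (c * x)) ^ n) ` A)"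
    unfolding bounded_iff using n1 by (intro exI[of _ 1]) auto
qed


theorem mainTheorem8:
  fixes \<gamma> \<sigma> :: "real \<Rightarrow> 'v::euclidean_space"
    and a b :: real
    and f :: "real \<Rightarrow> complex"
    and \<phi> :: "int \<Rightarrow> complex"
  assumes "continuous_on {a..b} \<gamma>" and "continuous_on {a..b} \<sigma>"
    and "bounded_variation_on a b \<gamma>" and "bounded_variation_on a b \<sigma>"
    and "f integrable_on {-pi..pi}" and "bounded (f ` {-pi<..<pi})"
    and "\<And>k. \<phi> k = integral {-pi..pi} (\<lambda>x. f x * exp (- \<i> * of_int k * of_real x)) / (2 * pi)"
    and "s \<in> {a..b}" and "t \<in> {a..b}"
  shows "sig_kernel_phi \<phi> \<gamma> \<sigma> a s t =
           integral {-pi..pi} (\<lambda>x. (sig_kernel_w (exp (- \<i> * of_real x)) \<gamma> \<sigma> a s t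
                                    + sig_kernel_w (exp (\<i> * of_real x)) \<gamma> \<sigma> a s t) * f x) / (2 * pi)
           - \<phi> 0"
proof -
  have bg: "bvpath \<gamma> a b" using assms(1,3) by (simp add: bvpath_def)
  have bs: "bvpath \<sigma> a b" using assms(2,4) by (simp add: bvpath_def)
  define C where "C n = sig_ip \<gamma> \<sigma> a n s t" for n
  define L where "L = real DIM('v) * tvar \<gamma> a b * tvar \<sigma> a b"
  have Cb: "norm \<bar>C n\<bar> \<le> inverse (fact n) * L ^ n" for n
    using sig_ip_le[OF bg bs assms(8,9), of n] by (simp add: C_def L_def divide_inverse mult.commute)
  have sumC: "summable (\<lambda>n. \<bar>C n\<bar>)"
    by (rule summable_comparison_test'[OF summable_exp[of L] Cb])
  define A where "A = (\<Sum>n. \<bar>C n\<bar>)"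
  have partA: "(\<Sum>n<m. \<bar>C n\<bar>) \<le> A" for m
    unfolding A_def by (rule sum_le_suminf[OF sumC]) auto
  have C0: "C 0 = 1"
  proof -
    have "words 0 = ({[]} :: 'v list set)" by (auto simp: words_def)
    then show ?thesis by (simp add: C_def sig_ip_def)
  qed
  define S where "S = {-pi<..<pi}"
  define E where "E n x = exp (- \<i> * of_real x) ^ n" for n and x :: real
  define E' where "E' n x = exp (\<i> * of_real x) ^ n" for n and x :: real
  have Ee: "E n x = exp (\<i> * of_real ((-1) * x)) ^ n" "E' n x = exp (\<i> * of_real (1 * x)) ^ n" for n x
    by (simp_all add: E_def E'_def)
  have En: "norm (E n x) = 1" "norm (E' n x) = 1" for n x
    unfolding Ee by (rule exp_bounded)+
  have Ei: "(\<lambda>x. E n x * f x) integrable_on S" "(\<lambda>x. E' n x * f x) integrable_on S" for n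
  proof -
    show "(\<lambda>x. E n x * f x) integrable_on S"
      unfolding S_def Ee by (rule fourier_setup(2)[OF assms(5,6)] exp_bounded)+
    show "(\<lambda>x. E' n x * f x) integrable_on S"
      unfolding S_def Ee by (rule fourier_setup(2)[OF assms(5,6)] exp_bounded)+
  qed
  have nfi: "(\<lambda>x. norm (f x)) integrable_on S"
    unfolding S_def by (rule fourier_setup(1)[OF assms(5,6)])
  have phip: "\<phi> (int n) = integral S (\<lambda>x. E n x * f x) / (2 * pi)" for n
  proof -
    have "exp (- \<i> * of_int (int n) * of_real x) = E n x" for x
      using exp_of_nat_mult[of n "- \<i> * of_real x"] by (simp add: E_def mult.commute mult.left_commute)
    then show ?thesis using assms(7)[of "int n"]
      by (simp add: S_def integral_open_interval_real mult.commute)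
  qed
  have phin: "\<phi> (- int n) = integral S (\<lambda>x. E' n x * f x) / (2 * pi)" for n
  proof -
    have "exp (- \<i> * of_int (- int n) * of_real x) = E' n x" for x
      using exp_of_nat_mult[of n "\<i> * of_real x"] by (simp add: E'_def mult.commute mult.left_commute)
    then show ?thesis using assms(7)[of "- int n"]
      by (simp add: S_def integral_open_interval_real mult.commute)
  qed
  define K where "K x = sig_kernel_w (exp (- \<i> * of_real x)) \<gamma> \<sigma> a s t
                        + sig_kernel_w (exp (\<i> * of_real x)) \<gamma> \<sigma> a s t" for x
  have sE: "summable (\<lambda>n. E n x * of_real (C n))" "summable (\<lambda>n. E' n x * of_real (C n))" for x
    by (rule summable_norm_cancel, use sumC in \<open>simp add: norm_mult En\<close>)+
  have Kx: "K x = (\<Sum>n. E n x * of_real (C n)) + (\<Sum>n. E' n x * of_real (C n))" for x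
    by (simp add: K_def sig_kernel_w_def E_def E'_def C_def)
  define P where "P m x = ((\<Sum>n<m. E n x * of_real (C n)) + (\<Sum>n<m. E' n x * of_real (C n))) * f x" for m x
  have Peq: "P m x = (\<Sum>n<m. of_real (C n) * (E n x * f x) + of_real (C n) * (E' n x * f x))" for m x
    by (simp add: P_def sum_distrib_left sum_distrib_right sum.distrib algebra_simps)
  have Pint: "P m integrable_on S" for m
    unfolding Peq[abs_def] using Ei
    by (intro integrable_sum integrable_add integrable_on_cmult_left) auto
  have Pintegral: "integral S (P m) = (\<Sum>n<m. of_real (C n) * (2 * pi) * (\<phi> (int n) + \<phi> (- int n)))" for m
  proof -
    have "integral S (P m) = (\<Sum>n<m. integral S (\<lambda>x. of_real (C n) * (E n x * f x) + of_real (C n) * (E' n x * f x)))"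
      unfolding Peq[abs_def] using Ei
      by (intro integral_sum) (auto intro!: integrable_add integrable_on_cmult_left)
    also have "\<dots> = (\<Sum>n<m. of_real (C n) * integral S (\<lambda>x. E n x * f x) + of_real (C n) * integral S (\<lambda>x. E' n x * f x))"
      using Ei by (intro sum.cong refl) (simp add: integral_add integrable_on_cmult_left integral_mult_right)
    also have "\<dots> = (\<Sum>n<m. of_real (C n) * (2 * pi) * (\<phi> (int n) + \<phi> (- int n)))"
      by (simp add: phip phin algebra_simps)
    finally show ?thesis .
  qed
  have Pb: "norm (P m x) \<le> 2 * A * norm (f x)" for m x
  proof -
    have "norm (\<Sum>n<m. E n x * of_real (C n)) \<le> (\<Sum>n<m. \<bar>C n\<bar>)"
      by (rule order_trans[OF norm_sum]) (simp add: norm_mult En)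
    moreover have "norm (\<Sum>n<m. E' n x * of_real (C n)) \<le> (\<Sum>n<m. \<bar>C n\<bar>)"
      by (rule order_trans[OF norm_sum]) (simp add: norm_mult En)
    ultimately have "norm ((\<Sum>n<m. E n x * of_real (C n)) + (\<Sum>n<m. E' n x * of_real (C n))) \<le> 2 * A"
      using partA[of m] norm_triangle_ineq[of "\<Sum>n<m. E n x * of_real (C n)" "\<Sum>n<m. E' n x * of_real (C n)"]
      by linarith
    then show ?thesis unfolding P_def norm_mult by (rule mult_right_mono) simp
  qed
  have hint: "(\<lambda>x. 2 * A * norm (f x)) integrable_on S"
    using integrable_on_cmult_left[OF nfi, of "2 * A"] by simp
  have Pconv: "(\<lambda>m. P m x) \<longlonglongrightarrow> K x * f x" for x
    unfolding P_def Kx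
    by (intro tendsto_mult_right tendsto_add summable_LIMSEQ sE)
  have lim: "(\<lambda>m. integral S (P m)) \<longlonglongrightarrow> integral S (\<lambda>x. K x * f x)"
    by (rule dominated_convergence(2)[OF Pint hint Pb Pconv])
  define T where "T n = of_real (C n) * (\<phi> (int n) + \<phi> (- int n))" for n
  have "(\<lambda>n. T n * (2 * pi)) sums integral S (\<lambda>x. K x * f x)"
    unfolding sums_def using lim by (simp add: Pintegral T_def algebra_simps)
  then have "(\<lambda>n. T n * (2 * pi) / (2 * pi)) sums (integral S (\<lambda>x. K x * f x) / (2 * pi))"
    by (rule sums_divide)
  then have Tsums: "T sums (integral S (\<lambda>x. K x * f x) / (2 * pi))" by simp
  have RHS: "integral {-pi..pi} (\<lambda>x. K x * f x) / (2 * pi) - \<phi> 0 = (\<Sum>n. T n) - \<phi> 0"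
    using Tsums sums_unique by (simp add: S_def integral_open_interval_real)
  obtain B where B: "\<And>k. norm (\<phi> k) \<le> B"
  proof -
    have "norm (\<phi> k) \<le> integral S (\<lambda>x. norm (f x)) / (2 * pi)" for k
    proof -
      have ex: "(\<lambda>x. exp (- \<i> * of_int k * of_real x) * f x) integrable_on S"
      proof -
        have e: "exp (- \<i> * of_int k * of_real x) = exp (\<i> * of_real ((- of_int k) * x)) ^ 1" for x
          by (simp add: mult.commute mult.left_commute)
        show ?thesis unfolding S_def e by (rule fourier_setup(2)[OF assms(5,6)] exp_bounded)+
      qed
      have "norm (integral S (\<lambda>x. exp (- \<i> * of_int k * of_real x) * f x)) \<le> integral S (\<lambda>x. norm (f x))"
      proof (rule integral_norm_bound_integral[OF ex nfi])
        fix x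
        have e: "exp (- \<i> * of_int k * of_real x) = exp (\<i> * of_real ((- of_int k) * x)) ^ 1"
          by (simp add: mult.commute mult.left_commute)
        show "norm (exp (- \<i> * of_int k * of_real x) * f x) \<le> norm (f x)"
          unfolding norm_mult e exp_bounded(3) by simp
      qed
      moreover have "\<phi> k = integral S (\<lambda>x. exp (- \<i> * of_int k * of_real x) * f x) / (2 * pi)"
        using assms(7)[of k] by (simp add: S_def integral_open_interval_real mult.commute)
      ultimately show ?thesis by (simp add: norm_divide divide_right_mono)
    qed
    then show ?thesis using that by blast
  qed
  define g where "g k = \<phi> k * of_real (sig_ip \<gamma> \<sigma> a (nat \<bar>k\<bar>) s t)" for k
  have gn: "norm (g k) \<le> B * \<bar>C (nat \<bar>k\<bar>)\<bar>" for k
    unfolding g_def C_def norm_mult norm_of_real using B[of k] by (intro mult_right_mono) auto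
  have B0: "B \<ge> 0" using B[of 0] norm_ge_zero order_trans by blast
  have sBC: "summable (\<lambda>n. B * \<bar>C n\<bar>)" using sumC by (rule summable_mult)
  have sBC1: "summable (\<lambda>n. B * \<bar>C (Suc n)\<bar>)" using sBC by (subst summable_Suc_iff)
  define X1 where "X1 = (\<Sum>n. g (int n))"
  define X2 where "X2 = (\<Sum>n. g (- int (Suc n)))"
  have gn1: "norm (norm (g (int n))) \<le> B * \<bar>C n\<bar>" for n using gn[of "int n"] by simp
  have gn2: "norm (norm (g (- int (Suc n)))) \<le> B * \<bar>C (Suc n)\<bar>" for n
  proof -
    have "nat \<bar>- int (Suc n)\<bar> = Suc n" by simp
    then show ?thesis using gn[of "- int (Suc n)"] by (metis abs_norm_cancel real_norm_def)
  qed
  have s1: "summable (\<lambda>n. norm (g (int n)))"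
    by (rule summable_comparison_test'[OF sBC gn1])
  have s2: "summable (\<lambda>n. norm (g (- int (Suc n))))"
    by (rule summable_comparison_test'[OF sBC1 gn2])
  have h1: "(g has_sum X1) (range int)"
  proof -
    have "((g \<circ> int) has_sum X1) UNIV"
      using norm_summable_imp_has_sum[OF s1] summable_norm_cancel[OF s1] by (simp add: X1_def o_def summable_sums)
    then show ?thesis by (subst has_sum_reindex) (auto simp: inj_on_def)
  qed
  have h2: "(g has_sum X2) (range (\<lambda>n. - int (Suc n)))"
  proof -
    have "((g \<circ> (\<lambda>n. - int (Suc n))) has_sum X2) UNIV"
      using norm_summable_imp_has_sum[OF s2] summable_norm_cancel[OF s2] by (simp add: X2_def o_def summable_sums)
    then show ?thesis by (subst has_sum_reindex) (auto simp: inj_on_def)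
  qed
  have un: "range int \<union> range (\<lambda>n. - int (Suc n)) = (UNIV :: int set)"
  proof -
    have "k \<in> range int \<union> range (\<lambda>n. - int (Suc n))" for k :: int
    proof (cases "k \<ge> 0")
      case True then show ?thesis by (metis UnI1 nonneg_int_cases rangeI)
    next
      case False
      then have "k = - int (Suc (nat (- k - 1)))" by simp
      then show ?thesis by (metis UnI2 rangeI)
    qed
    then show ?thesis by auto
  qed
  have "(g has_sum (X1 + X2)) UNIV"
    using has_sum_Un_disjoint[OF h1 h2] un by force
  then have LHS: "sig_kernel_phi \<phi> \<gamma> \<sigma> a s t = X1 + X2"
    unfolding sig_kernel_phi_def g_def[symmetric] by (rule infsumI)
  have sT1: "summable (\<lambda>n. g (int n))" using summable_norm_cancel[OF s1] .
  have sT2': "summable (\<lambda>n. g (- int (Suc n)))" using summable_norm_cancel[OF s2] .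
  have gm: "g (- int n) = \<phi> (- int n) * of_real (C n)" "g (int n) = \<phi> (int n) * of_real (C n)" for n
    by (simp_all add: g_def C_def)
  have sT2: "summable (\<lambda>n. g (- int n))"
    using sT2' by (subst summable_Suc_iff[symmetric]) simp
  have "(\<Sum>n. g (- int n)) = (\<Sum>n. g (- int (Suc n))) + g (- int 0)"
    using suminf_split_head[OF sT2] by simp
  then have X2e: "(\<Sum>n. g (- int n)) = X2 + \<phi> 0"
    by (simp add: X2_def g_def C0[unfolded C_def])
  have Teq: "T n = g (int n) + g (- int n)" for n
    by (simp add: T_def gm algebra_simps)
  have "(\<Sum>n. T n) = X1 + (\<Sum>n. g (- int n))"
    unfolding Teq[abs_def] X1_def by (rule suminf_add[OF sT1 sT2, symmetric])
  then have "(\<Sum>n. T n) - \<phi> 0 = X1 + X2" using X2e by simp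
  then show ?thesis using LHS RHS by (simp add: K_def)
qed


end
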